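(* For any $p, c \in \mathbb{N}^+$, there exists a decoder-only Transformer model $M: \mathcal{V}^* \to \mathcal{V}$ that autoregressively decides $\operatorname{3-SAT}_{p,c}$ in no more than $p \cdot 2^{p+1}$ Chain-of-Thought iterations. The model $M$ has $L = 7$ layers, $H = 5$ attention heads, embedding dimension $d_{\text{emb}} = O(p)$, and $O(p^2)$ parameters.
   Context: Decoder-only Transformer: given tokens $s_1,\dots,s_n$ from a finite vocabulary $\mathcal{V}$, form $X^{(0)} = (\operatorname{Emb}(s_1)+p_1,\dots,\operatorname{Emb}(s_n)+p_n)\in\mathbb{R}^{n\times d}$ with a fixed token embedding and positional encoding vectors $p_i$. For $l=1,\dots,L$: $H^{(l)} = X^{(l-1)} + \operatorname{MHA}(X^{(l-1)})$ and $X^{(l)} = H^{(l)} + \operatorname{MLP}(H^{(l)})$, where $\operatorname{MHA}(X) = [\operatorname{Att}_1(X);\dots;\operatorname{Att}_H(X)]W_O$, $\operatorname{Att}_h(X) = \operatorname{softmax}\big(XW_Q^{h}(XW_K^{h})^\top/\sqrt{d_h} + \mathbf{M}\big)XW_V^{h}$ with a causal mask $\mathbf{M}$ (each position attends only to itself and earlier positions), and $\operatorname{MLP}(H) = \operatorname{ReGLU}(HW_1+b_1)W_2+b_2$ where $\operatorname{ReGLU}(u_1,u_2) = u_1\otimes\operatorname{ReLU}(u_2)$ (elementwise product of the two halves). The output token is $s_{n+1} = \arg\max_v (X^{(L)}W_{\text{out}}+b_{\text{out}})_{n,v}$ (greedy decoding). The parameter count excludes the positional encodings; the positional encoding at position $i$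 is the numerical value $i$ in one designated coordinate. Greedy autoregressive generation: starting from the prompt $s_{1:n}$, repeatedly append $s_t = M(s_{1:t-1})$ until a token in a stop set $\mathcal{E}\subseteq\mathcal{V}$ is produced; the generated tokens are the Chain-of-Thought (CoT), and each generated token is one CoT iteration. A decision problem is a map $f: L\to\{0,1\}$ on a set $L$ of strings over an alphabet $\Sigma\subseteq\mathcal{V}$. For $\mathcal{E}=\{\mathcal{E}_0,\mathcal{E}_1\}\subset\mathcal{V}$, the procedure $\mathcal{A}_{M,\mathcal{E}}$ runs greedy generation with stop tokens $\mathcal{E}$ and outputs $0$ if the generated sequence ends with $\mathcal{E}_0$ and $1$ otherwise. $M$ autoregressively decides $f$ if there is some $\mathcal{E}$ such that on every input $x\in L$, $\mathcal{A}_{M,\mathcal{E}}$ halts and outputs $f(x)$. $\operatorname{DIMACS}(p,c)$: the set of DIMACS encodings of 3-SAT formulas (CNF formulas with at most 3 literals per clause) with at most $p$ variables $x_1,\dots,x_p$ and at most $c$ clauses, where literal $x_i$ is the token $i$, literal $\lnot x_i$ is the token $-i$, each clause is written as its literal tokens followed by the token $0$, with a token [BOS] prepended and a token [SEP] appended. $\operatorname{3-SAT}_{p,c}: \operatorname{DIMACS}(p,c)\to\{0,1\}$ maps an encoding to $1$ iff the encoded formula is satisfiable. *)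

theory Defs
  imports Complex_Main
begin

text \<open>Lit i is the integer token i (literal x_i for i > 0, literal
  not x_i for i < 0, clause terminator for i = 0). Aux n are further tokens a model
  may put into its (finite) vocabulary.\<close>
datatype tok = Lit int | BOS | SEP | Aux nat

text \<open>Vectors are functions nat => real, matrices nat => nat => real (row, column);
  only the entries inside the declared dimensions are ever used.\<close>

record layer =
  dhead :: nat
  dmlp :: nat                               \<comment> \<open>MLP width m (W1 has 2m columns)\<close>
  WQ :: "nat \<Rightarrow> nat \<Rightarrow> nat \<Rightarrow> real"      \<comment> \<open>head h, d x d_h\<close>
  WK :: "nat \<Rightarrow> nat \<Rightarrow> nat \<Rightarrow> real"
  WV :: "nat \<Rightarrow> nat \<Rightarrow> nat \<Rightarrow> real"
  WO :: "nat \<Rightarrow> nat \<Rightarrow> real"             \<comment> \<open>(H d_h) x d\<close>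
  W1 :: "nat \<Rightarrow> nat \<Rightarrow> real"             \<comment> \<open>d x 2m\<close>
  b1 :: "nat \<Rightarrow> real"
  W2 :: "nat \<Rightarrow> nat \<Rightarrow> real"             \<comment> \<open>m x d\<close>
  b2 :: "nat \<Rightarrow> real"

record transformer =
  vocab :: "tok list"
  dim :: nat
  nheads :: nat
  layers :: "layer list"
  emb :: "tok \<Rightarrow> nat \<Rightarrow> real"
  pos_coord :: nat
  Wout :: "nat \<Rightarrow> nat \<Rightarrow> real"           \<comment> \<open>d x |V|, column j belongs to vocab ! j\<close>
  bout :: "nat \<Rightarrow> real"

definition wf_transformer :: "transformer \<Rightarrow> bool" where
  "wf_transformer M \<longleftrightarrow> vocab M \<noteq> [] \<and> distinct (vocab M) \<and> pos_coord M < dim M"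

text \<open>Number of parameters (positional encodings excluded): all entries of the token
  embedding, of all attention / MLP weights and biases, and of the output layer.\<close>
definition layer_params :: "nat \<Rightarrow> nat \<Rightarrow> layer \<Rightarrow> nat" where
  "layer_params d H l =
     3 * H * d * dhead l + H * dhead l * d
     + d * (2 * dmlp l) + 2 * dmlp l + dmlp l * d + d"

definition num_params :: "transformer \<Rightarrow> nat" where
  "num_params M =
     length (vocab M) * dim M
     + (\<Sum>l\<leftarrow>layers M. layer_params (dim M) (nheads M) l)
     + dim M * length (vocab M) + length (vocab M)"

text \<open>A sequence state X is a function (position, coordinate) => real; positions are
  0-based internally, position i carries the positional value i+1.\<close>

definition embed :: "transformer \<Rightarrow> tok list \<Rightarrow> nat \<Rightarrow> nat \<Rightarrow> real" where
  "embed M s i k = emb M (s ! i) k + (if k = pos_coord M then real (Suc i) else 0)"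

definition attn_score :: "nat \<Rightarrow> layer \<Rightarrow> (nat \<Rightarrow> nat \<Rightarrow> real) \<Rightarrow> nat \<Rightarrow> nat \<Rightarrow> nat \<Rightarrow> real" where
  "attn_score d l X h i j =
     (\<Sum>a<dhead l. (\<Sum>k<d. X i k * WQ l h k a) * (\<Sum>k<d. X j k * WK l h k a))
       / sqrt (real (dhead l))"

definition attn_head :: "nat \<Rightarrow> layer \<Rightarrow> (nat \<Rightarrow> nat \<Rightarrow> real) \<Rightarrow> nat \<Rightarrow> nat \<Rightarrow> nat \<Rightarrow> real" where
  "attn_head d l X h i c =
     (\<Sum>j\<le>i. exp (attn_score d l X h i j) * (\<Sum>k<d. X j k * WV l h k c))
       / (\<Sum>j\<le>i. exp (attn_score d l X h i j))"

definition mha :: "nat \<Rightarrow> nat \<Rightarrow> layer \<Rightarrow> (nat \<Rightarrow> nat \<Rightarrow> real) \<Rightarrow> nat \<Rightarrow> nat \<Rightarrow> real" where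
  "mha d H l X i k = (\<Sum>h<H. \<Sum>c<dhead l. attn_head d l X h i c * WO l (h * dhead l + c) k)"

definition mlp :: "nat \<Rightarrow> layer \<Rightarrow> (nat \<Rightarrow> nat \<Rightarrow> real) \<Rightarrow> nat \<Rightarrow> nat \<Rightarrow> real" where
  "mlp d l Y i k =
     (let u = (\<lambda>r. (\<Sum>q<d. Y i q * W1 l q r) + b1 l r) in
      (\<Sum>r<dmlp l. (u r * max 0 (u (dmlp l + r))) * W2 l r k) + b2 l k)"

definition apply_layer :: "nat \<Rightarrow> nat \<Rightarrow> layer \<Rightarrow> (nat \<Rightarrow> nat \<Rightarrow> real) \<Rightarrow> nat \<Rightarrow> nat \<Rightarrow> real" where
  "apply_layer d H l X =
     (let Y = (\<lambda>i k. X i k + mha d H l X i k) in (\<lambda>i k. Y i k + mlp d l Y i k))"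

definition forward :: "transformer \<Rightarrow> tok list \<Rightarrow> nat \<Rightarrow> nat \<Rightarrow> real" where
  "forward M s = fold (apply_layer (dim M) (nheads M)) (layers M) (embed M s)"

definition logits :: "transformer \<Rightarrow> tok list \<Rightarrow> nat \<Rightarrow> real" where
  "logits M s j = (\<Sum>k<dim M. forward M s (length s - 1) k * Wout M k j) + bout M j"

text \<open>Greedy decoding: the arg max over the vocabulary; ties are broken in favour of
  the earliest vocabulary entry.\<close>
definition next_tok :: "transformer \<Rightarrow> tok list \<Rightarrow> tok" where
  "next_tok M s = vocab M ! (LEAST j. j < length (vocab M) \<and>
       (\<forall>j'<length (vocab M). logits M s j' \<le> logits M s j))"

fun run :: "transformer \<Rightarrow> tok list \<Rightarrow> nat \<Rightarrow> tok list" where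
  "run M s 0 = s"
| "run M s (Suc t) = run M s t @ [next_tok M (run M s t)]"

text \<open>The t-th generated (CoT) token, t \<ge> 1.\<close>
definition gen_tok :: "transformer \<Rightarrow> tok list \<Rightarrow> nat \<Rightarrow> tok" where
  "gen_tok M s t = last (run M s t)"

definition halts_with :: "transformer \<Rightarrow> tok \<Rightarrow> tok \<Rightarrow> tok list \<Rightarrow> nat \<Rightarrow> nat \<Rightarrow> bool" where
  "halts_with M E0 E1 s t b \<longleftrightarrow>
     1 \<le> t \<and> gen_tok M s t \<in> {E0, E1} \<and>
     (\<forall>t'. 1 \<le> t' \<and> t' < t \<longrightarrow> gen_tok M s t' \<notin> {E0, E1}) \<and>
     b = (if gen_tok M s t = E0 then 0 else 1)"

text \<open>A formula is a list of clauses, a clause a list of nonzero integer literals.\<close>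
definition valid_formula :: "nat \<Rightarrow> nat \<Rightarrow> int list list \<Rightarrow> bool" where
  "valid_formula p c F \<longleftrightarrow> length F \<le> c \<and>
     (\<forall>C\<in>set F. 1 \<le> length C \<and> length C \<le> 3 \<and>
        (\<forall>l\<in>set C. l \<noteq> 0 \<and> \<bar>l\<bar> \<le> int p))"

definition dimacs :: "int list list \<Rightarrow> tok list" where
  "dimacs F = [BOS] @ concat (map (\<lambda>C. map Lit C @ [Lit 0]) F) @ [SEP]"

definition DIMACS :: "nat \<Rightarrow> nat \<Rightarrow> tok list set" where
  "DIMACS p c = dimacs ` {F. valid_formula p c F}"

definition lit_true :: "(nat \<Rightarrow> bool) \<Rightarrow> int \<Rightarrow> bool" where
  "lit_true \<alpha> l \<longleftrightarrow> (if l > 0 then \<alpha> (nat l) else \<not> \<alpha> (nat (- l)))"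

definition satisfiable :: "int list list \<Rightarrow> bool" where
  "satisfiable F \<longleftrightarrow> (\<exists>\<alpha>. \<forall>C\<in>set F. \<exists>l\<in>set C. lit_true \<alpha> l)"

text \<open>3-SAT_{p,c}: value on an encoding x in DIMACS(p,c) (the decoding is unique).\<close>
definition three_sat :: "nat \<Rightarrow> nat \<Rightarrow> tok list \<Rightarrow> nat" where
  "three_sat p c x =
     (if \<exists>F. valid_formula p c F \<and> x = dimacs F \<and> satisfiable F then 1 else 0)"

definition dimacs_alphabet :: "nat \<Rightarrow> tok set" where
  "dimacs_alphabet p = {BOS, SEP} \<union> {Lit i | i. \<bar>i\<bar> \<le> int p}"

definition decides_3sat_within :: "transformer \<Rightarrow> nat \<Rightarrow> nat \<Rightarrow> nat \<Rightarrow> bool" where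
  "decides_3sat_within M p c N \<longleftrightarrow>
     dimacs_alphabet p \<subseteq> set (vocab M) \<and>
     (\<exists>E0 E1. E0 \<in> set (vocab M) \<and> E1 \<in> set (vocab M) \<and> E0 \<noteq> E1 \<and>
        (\<forall>x\<in>DIMACS p c. \<exists>t\<le>N. halts_with M E0 E1 x t (three_sat p c x)))"

end

theory Submission
  imports Defs
begin

lemma sum_delta_mult: "(\<Sum>k<(d::nat). (f::nat\<Rightarrow>real) k * (if k = b then w else 0)) = (if b < d then f b * w else 0)"
  by (simp add: if_distrib sum.delta' cong: if_cong)

lemma sum_single:
  assumes "finite A" "a \<in> A" "\<And>x. x \<in> A \<Longrightarrow> x \<noteq> a \<Longrightarrow> f x = 0"
  shows "sum f A = f a"
proof -
  have "sum f A = f a + sum f (A - {a})" using assms by (simp add: sum.remove)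
  also have "sum f (A - {a}) = 0" using assms by (intro sum.neutral) auto
  finally show ?thesis by simp
qed

lemma sum_range_mult:
  assumes "a + n \<le> d"
  shows "(\<Sum>k<(d::nat). (f::nat\<Rightarrow>real) k * (if a \<le> k \<and> k < a + n then w (k - a) else 0))
         = (\<Sum>v<n. f (a + v) * w v)"
proof -
  have "(\<Sum>k<d. f k * (if a \<le> k \<and> k < a + n then w (k - a) else 0))
      = (\<Sum>k\<in>{a..<a+n}. f k * w (k - a))"
    using assms by (intro sum.mono_neutral_cong_right) auto
  also have "\<dots> = (\<Sum>v<n. f (a + v) * w v)"
  proof -
    have "{a..<a+n} = (\<lambda>v. a + v) ` {..<n}" by (auto simp: image_iff) (metis add_diff_inverse_nat add_less_imp_less_left lessThan_iff not_less)
    then show ?thesis by (simp add: sum.reindex)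
  qed
  finally show ?thesis .
qed

section \<open>The construction\<close>

definition litOf :: "nat \<Rightarrow> nat \<Rightarrow> int" where
  "litOf p c = (if c < p then int c + 1 else - (int (c - p) + 1))"

definition gval :: "tok \<Rightarrow> nat \<Rightarrow> real" where
  "gval tok v = (case tok of Aux n \<Rightarrow> if n = v + 2 then 1 else if v + 2 < n then -1 else 0 | _ \<Rightarrow> 0)"

definition fval :: "nat \<Rightarrow> tok \<Rightarrow> nat \<Rightarrow> real" where
  "fval p tok c = (if tok = Lit (litOf p c) then 1 else 0)"

definition isz :: "tok \<Rightarrow> real" where
  "isz tok = (if tok = Lit 0 then 1 else 0)"

definition embM :: "nat \<Rightarrow> tok \<Rightarrow> nat \<Rightarrow> real" where
  "embM p tok k = (if k = 0 then 1 else if k = 2 then isz tok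
     else if 6 \<le> k \<and> k < 6 + p then gval tok (k - 6)
     else if 6 + 4*p \<le> k \<and> k < 6 + 6*p then fval p tok (k - (6 + 4*p)) else 0)"

definition L0 :: layer where
  "L0 = \<lparr>dhead = 0, dmlp = 0, WQ = (\<lambda>h k a. 0), WK = (\<lambda>h k a. 0), WV = (\<lambda>h k a. 0),
     WO = (\<lambda>r k. 0), W1 = (\<lambda>q r. 0), b1 = (\<lambda>r. 0), W2 = (\<lambda>r k. 0), b2 = (\<lambda>k. 0)\<rparr>"

definition L1 :: "nat \<Rightarrow> layer" where
  "L1 p = \<lparr>dhead = p + 1, dmlp = 0, WQ = (\<lambda>h k a. 0), WK = (\<lambda>h k a. 0),
     WV = (\<lambda>h k c. if c = 0 then (if k = 2 then 1 else 0) else if k = 6 + (c - 1) then 1 else 0),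
     WO = (\<lambda>r k. if r = 0 then (if k = 4 then 1 else 0) else if r \<le> p \<and> k = 6 + p + (r - 1) then 1 else 0),
     W1 = (\<lambda>q r. 0), b1 = (\<lambda>r. 0), W2 = (\<lambda>r k. 0), b2 = (\<lambda>k. 0)\<rparr>"

definition L2 :: "nat \<Rightarrow> layer" where
  "L2 p = \<lparr>dhead = 0, dmlp = p + 1, WQ = (\<lambda>h k a. 0), WK = (\<lambda>h k a. 0), WV = (\<lambda>h k a. 0),
     WO = (\<lambda>r k. 0),
     W1 = (\<lambda>q r. if r = 0 then (if q = 4 then 1 else 0)
                 else if r \<le> p then (if q = 6 + p + (r - 1) then 1 else 0)
                 else if q = 1 then 1 else 0),
     b1 = (\<lambda>r. 0),
     W2 = (\<lambda>r k. if r = 0 then (if k = 3 then 1 else 0) else if k = 6 + 2*p + (r - 1) then 1 else 0),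
     b2 = (\<lambda>k. 0)\<rparr>"

definition L3 :: "nat \<Rightarrow> real \<Rightarrow> layer" where
  "L3 p \<beta> = \<lparr>dhead = 2*p, dmlp = 0,
     WQ = (\<lambda>h k a. if k = 0 \<and> a = 0 then \<beta> * sqrt (real (2*p)) else 0),
     WK = (\<lambda>h k a. if a = 0 then (if k = 3 then 1 else if k = 2 then -1 else 0) else 0),
     WV = (\<lambda>h k c. if k = 6 + 4*p + c then 1 else 0),
     WO = (\<lambda>r k. if r < 2*p \<and> k = 6 + 6*p + r then 1 else 0),
     W1 = (\<lambda>q r. 0), b1 = (\<lambda>r. 0), W2 = (\<lambda>r k. 0), b2 = (\<lambda>k. 0)\<rparr>"

definition L4 :: "nat \<Rightarrow> layer" where
  "L4 p = \<lparr>dhead = 0, dmlp = p, WQ = (\<lambda>h k a. 0), WK = (\<lambda>h k a. 0), WV = (\<lambda>h k a. 0),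
     WO = (\<lambda>r k. 0),
     W1 = (\<lambda>q r. if r < p then 0 else if q = 6 + 2*p + (r - p) then -1
                 else if 6 + 2*p \<le> q \<and> q < 6 + 2*p + (r - p) then 1 else 0),
     b1 = (\<lambda>r. if r < p then 1 else 1 - real (r - p)),
     W2 = (\<lambda>r k. if k = 6 + 3*p + r then 1 else 0),
     b2 = (\<lambda>k. 0)\<rparr>"

definition L5 :: "nat \<Rightarrow> real \<Rightarrow> layer" where
  "L5 p \<gamma> = \<lparr>dhead = p + 1, dmlp = 0,
     WQ = (\<lambda>h k a. if a < p then (if k = 6 + 2*p + a then 1 else 0) else if k = 0 then 1 else 0),
     WK = (\<lambda>h k a. - (\<gamma> * sqrt (real (p + 1))) *
             (if a < p then (if k = 6 + 6*p + a then 1 else if k = 6 + 7*p + a then -1 else 0)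
              else if 6 + 7*p \<le> k \<and> k < 6 + 8*p then 1 else 0)),
     WV = (\<lambda>h k c. if c = 0 \<and> k = 2 then 1 else 0),
     WO = (\<lambda>r k. if r = 0 \<and> k = 5 then 1 else 0),
     W1 = (\<lambda>q r. 0), b1 = (\<lambda>r. 0), W2 = (\<lambda>r k. 0), b2 = (\<lambda>k. 0)\<rparr>"

definition vocabM :: "nat \<Rightarrow> tok list" where
  "vocabM p = [Aux 0, Aux 1] @ map (\<lambda>v. Aux (v + 2)) [0..<p] @ [BOS, SEP] @ map Lit [- int p..int p]"

definition Mdl :: "nat \<Rightarrow> real \<Rightarrow> real \<Rightarrow> real \<Rightarrow> real \<Rightarrow> transformer" where
  "Mdl p \<beta> \<gamma> K \<theta> = \<lparr>vocab = vocabM p, dim = 6 + 8*p, nheads = 5,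
     layers = [L1 p, L2 p, L3 p \<beta>, L4 p, L5 p \<gamma>, L0, L0],
     emb = embM p, pos_coord = 1,
     Wout = (\<lambda>k j. if j = 1 \<and> k = 5 then - K
                   else if 2 \<le> j \<and> j < p + 2 \<and> k = 6 + 3*p + (j - 2) then 1 else 0),
     bout = (\<lambda>j. if j = 0 then 1/2 else if j = 1 then K * \<theta> else if j < p + 2 then 0 else -1)\<rparr>"

section \<open>Semantics of the forward pass\<close>

definition isZ :: "tok list \<Rightarrow> nat \<Rightarrow> real" where "isZ s j = isz (s ! j)"
definition ZC :: "tok list \<Rightarrow> nat \<Rightarrow> real" where "ZC s i = (\<Sum>j\<le>i. isZ s j)"
definition Al :: "tok list \<Rightarrow> nat \<Rightarrow> nat \<Rightarrow> real" where "Al s i v = (\<Sum>j\<le>i. gval (s ! j) v)"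

definition X0 :: "nat \<Rightarrow> tok list \<Rightarrow> nat \<Rightarrow> nat \<Rightarrow> real" where
  "X0 p s i k = embM p (s ! i) k + (if k = 1 then real (Suc i) else 0)"

definition X1 :: "nat \<Rightarrow> tok list \<Rightarrow> nat \<Rightarrow> nat \<Rightarrow> real" where
  "X1 p s i k = X0 p s i k + (if k = 4 then ZC s i / real (Suc i)
     else if 6 + p \<le> k \<and> k < 6 + 2*p then Al s i (k - (6 + p)) / real (Suc i) else 0)"

lemma embed_Mdl: "embed (Mdl p \<beta> \<gamma> K \<theta>) s = X0 p s"
  by (auto simp: embed_def Mdl_def X0_def fun_eq_iff)

lemma mlp_zero: "dmlp l = 0 \<Longrightarrow> b2 l = (\<lambda>k. 0) \<Longrightarrow> mlp d l Y i k = 0"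
  by (simp add: mlp_def)

lemma mha_zero: "dhead l = 0 \<Longrightarrow> mha d H l X i k = 0"
  by (simp add: mha_def)

lemma apply_layer_attn_only:
  "dmlp l = 0 \<Longrightarrow> b2 l = (\<lambda>k. 0) \<Longrightarrow> apply_layer d H l X = (\<lambda>i k. X i k + mha d H l X i k)"
  by (simp add: apply_layer_def mlp_zero Let_def)

lemma apply_layer_mlp_only:
  "dhead l = 0 \<Longrightarrow> apply_layer d H l X = (\<lambda>i k. X i k + mlp d l X i k)"
  by (simp add: apply_layer_def mha_zero Let_def)

lemma X0_simps:
  "X0 p s j 0 = 1" "X0 p s j 1 = real (Suc j)" "X0 p s j 2 = isz (s ! j)"
  "v < p \<Longrightarrow> X0 p s j (6 + v) = gval (s ! j) v"
  "c < 2*p \<Longrightarrow> X0 p s j (6 + 4*p + c) = fval p (s ! j) c"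
  "X0 p s j 3 = 0" "X0 p s j 4 = 0" "X0 p s j 5 = 0"
  "v < p \<Longrightarrow> X0 p s j (6 + p + v) = 0"
  "v < p \<Longrightarrow> X0 p s j (6 + 2*p + v) = 0"
  "v < p \<Longrightarrow> X0 p s j (6 + 3*p + v) = 0"
  "c < 2*p \<Longrightarrow> X0 p s j (6 + 6*p + c) = 0"
  by (auto simp: X0_def embM_def)

lemma L1f: "dhead (L1 p) = p + 1" "dmlp (L1 p) = 0" "b2 (L1 p) = (\<lambda>k. 0)"
  "WQ (L1 p) = (\<lambda>h k a. 0)" "WK (L1 p) = (\<lambda>h k a. 0)"
  "WV (L1 p) h k c = (if c = 0 then (if k = 2 then 1 else 0) else if k = 6 + (c - 1) then 1 else 0)"
  "WO (L1 p) r k = (if r = 0 then (if k = 4 then 1 else 0) else if r \<le> p \<and> k = 6 + p + (r - 1) then 1 else 0)"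
  by (simp_all add: L1_def)

lemma layer1: "apply_layer (6 + 8*p) 5 (L1 p) (X0 p s) = X1 p s"
proof -
  let ?d = "6 + 8*p"
  have V: "(\<Sum>k<?d. X0 p s j k * WV (L1 p) h k c) =
           (if c = 0 then isz (s ! j) else if c \<le> p then gval (s ! j) (c - 1) else 0)" if "c < p + 1" for j h c
  proof (cases "c = 0")
    case True
    then show ?thesis by (simp add: L1f sum_delta_mult X0_simps)
  next
    case False
    then have "(\<Sum>k<?d. X0 p s j k * WV (L1 p) h k c) = (\<Sum>k<?d. X0 p s j k * (if k = 6 + (c - 1) then 1 else 0))"
      by (simp add: L1f)
    also have "\<dots> = X0 p s j (6 + (c - 1))" using that False by (subst sum_delta_mult) auto
    also have "\<dots> = gval (s ! j) (c - 1)" using that False by (intro X0_simps) auto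
    finally show ?thesis using that False by simp
  qed
  have AH: "attn_head ?d (L1 p) (X0 p s) h i c =
       (if c = 0 then ZC s i else Al s i (c - 1)) / real (Suc i)" if "c < p + 1" for h i c
  proof -
    have sc: "attn_score ?d (L1 p) (X0 p s) h i j = 0" for j
      by (simp add: attn_score_def L1f)
    have "attn_head ?d (L1 p) (X0 p s) h i c =
          (\<Sum>j\<le>i. (\<Sum>k<?d. X0 p s j k * WV (L1 p) h k c)) / (\<Sum>j\<le>i. 1)"
      by (simp add: attn_head_def sc)
    also have "\<dots> = (\<Sum>j\<le>i. (if c = 0 then isz (s ! j) else if c \<le> p then gval (s ! j) (c - 1) else 0)) / real (Suc i)"
      using V[OF that] by simp
    also have "\<dots> = (if c = 0 then ZC s i else Al s i (c - 1)) / real (Suc i)"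
      using that by (auto simp: ZC_def Al_def isZ_def)
    finally show ?thesis .
  qed
  have MH: "mha ?d 5 (L1 p) (X0 p s) i k = (if k = 4 then ZC s i / real (Suc i)
     else if 6 + p \<le> k \<and> k < 6 + 2*p then Al s i (k - (6 + p)) / real (Suc i) else 0)" for i k
  proof -
    let ?A = "\<lambda>c. attn_head ?d (L1 p) (X0 p s) 0 i c * WO (L1 p) c k"
    have "mha ?d 5 (L1 p) (X0 p s) i k = (\<Sum>h<5. \<Sum>c<p+1. attn_head ?d (L1 p) (X0 p s) h i c * WO (L1 p) (h * (p+1) + c) k)"
      by (simp add: mha_def L1f)
    also have "\<dots> = (\<Sum>c<p+1. ?A c)"
    proof -
      have Z: "(\<Sum>c<p+1. attn_head ?d (L1 p) (X0 p s) h i c * WO (L1 p) (h * (p+1) + c) k) = 0"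
        if "h \<noteq> 0" for h
      proof (intro sum.neutral ballI)
        fix c assume "c \<in> {..<p + 1}"
        have "h * (p+1) \<ge> 1 * (p + 1)" using \<open>h \<noteq> 0\<close> by (intro mult_le_mono1) simp
        then show "attn_head ?d (L1 p) (X0 p s) h i c * WO (L1 p) (h * (p+1) + c) k = 0"
          using \<open>h \<noteq> 0\<close> by (simp add: L1f)
      qed
      show ?thesis apply (rule trans[OF sum_single[of "{..<5}" 0]]) using Z by auto
    qed
    also have "\<dots> = (if k = 4 then ZC s i / real (Suc i)
     else if 6 + p \<le> k \<and> k < 6 + 2*p then Al s i (k - (6 + p)) / real (Suc i) else 0)"
    proof (cases "k = 4")
      case True
      then show ?thesis by (subst sum_single[of _ 0]) (auto simp: L1f AH)
    next
      case F4: False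
      show ?thesis
      proof (cases "6 + p \<le> k \<and> k < 6 + 2*p")
        case True
        then show ?thesis using F4
          by (subst sum_single[of _ "k - (6 + p) + 1"]) (auto simp: L1f AH)
      next
        case False
        then show ?thesis using F4 by (auto simp: L1f intro!: sum.neutral)
      qed
    qed
    finally show ?thesis .
  qed
  show ?thesis
    by (subst apply_layer_attn_only) (auto simp: L1f MH X1_def fun_eq_iff)
qed

lemma X1_simps:
  "X1 p s i 0 = 1" "X1 p s i 1 = real (Suc i)" "X1 p s i 2 = isz (s ! i)"
  "X1 p s i 4 = ZC s i / real (Suc i)"
  "v < p \<Longrightarrow> X1 p s i (6 + p + v) = Al s i v / real (Suc i)"
  "c < 2*p \<Longrightarrow> X1 p s i (6 + 4*p + c) = fval p (s ! i) c"
  "X1 p s i 3 = 0" "X1 p s i 5 = 0"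
  "v < p \<Longrightarrow> X1 p s i (6 + 2*p + v) = 0"
  "v < p \<Longrightarrow> X1 p s i (6 + 3*p + v) = 0"
  "c < 2*p \<Longrightarrow> X1 p s i (6 + 6*p + c) = 0"
  by (auto simp: X1_def X0_simps X0_def embM_def)

definition X2 :: "nat \<Rightarrow> tok list \<Rightarrow> nat \<Rightarrow> nat \<Rightarrow> real" where
  "X2 p s i k = X1 p s i k + (if k = 3 then ZC s i
     else if 6 + 2*p \<le> k \<and> k < 6 + 3*p then Al s i (k - (6 + 2*p)) else 0)"

lemma L2f: "dhead (L2 p) = 0" "dmlp (L2 p) = p + 1" "b2 (L2 p) = (\<lambda>k. 0)" "b1 (L2 p) = (\<lambda>k. 0)"
  "W1 (L2 p) q r = (if r = 0 then (if q = 4 then 1 else 0)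
                 else if r \<le> p then (if q = 6 + p + (r - 1) then 1 else 0)
                 else if q = 1 then 1 else 0)"
  "W2 (L2 p) r k = (if r = 0 then (if k = 3 then 1 else 0) else if k = 6 + 2*p + (r - 1) then 1 else 0)"
  by (simp_all add: L2_def)

lemma layer2: "apply_layer (6 + 8*p) 5 (L2 p) (X1 p s) = X2 p s"
proof -
  let ?d = "6 + 8*p"
  define u where "u = (\<lambda>i r. (\<Sum>q<?d. X1 p s i q * W1 (L2 p) q r) + b1 (L2 p) r)"
  have u1: "u i r = (if r = 0 then ZC s i else Al s i (r - 1)) / real (Suc i)" if "r < p + 1" for i r
  proof (cases "r = 0")
    case True
    then show ?thesis by (simp add: u_def L2f sum_delta_mult X1_simps)
  next
    case False
    then have "u i r = (\<Sum>q<?d. X1 p s i q * (if q = 6 + p + (r - 1) then 1 else 0))"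
      using that by (simp add: u_def L2f)
    also have "\<dots> = X1 p s i (6 + p + (r - 1))" using that False by (subst sum_delta_mult) auto
    also have "\<dots> = Al s i (r - 1) / real (Suc i)" using that False by (intro X1_simps) auto
    finally show ?thesis using False by simp
  qed
  have u2: "u i r = real (Suc i)" if "p < r" for i r using that
    by (simp add: u_def L2f sum_delta_mult X1_def X0_def embM_def)
  have MLq: "mlp ?d (L2 p) (X1 p s) i k = (if k = 3 then ZC s i
     else if 6 + 2*p \<le> k \<and> k < 6 + 3*p then Al s i (k - (6 + 2*p)) else 0)" for i k
  proof -
    let ?A = "\<lambda>r. (if r = 0 then ZC s i else Al s i (r - 1)) * W2 (L2 p) r k"
    have "mlp ?d (L2 p) (X1 p s) i k = (\<Sum>r<p+1. (u i r * max 0 (u i (p + 1 + r))) * W2 (L2 p) r k)"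
      by (simp add: mlp_def u_def L2f Let_def)
    also have "\<dots> = (\<Sum>r<p+1. ?A r)"
    proof (intro sum.cong refl)
      fix r assume "r \<in> {..<p+1}"
      then show "(u i r * max 0 (u i (p + 1 + r))) * W2 (L2 p) r k = ?A r"
        by (simp add: u1 u2 del: of_nat_Suc)
    qed
    also have "\<dots> = (if k = 3 then ZC s i
     else if 6 + 2*p \<le> k \<and> k < 6 + 3*p then Al s i (k - (6 + 2*p)) else 0)"
    proof (cases "k = 3")
      case True
      then show ?thesis by (subst sum_single[of _ 0]) (auto simp: L2f)
    next
      case F3: False
      show ?thesis
      proof (cases "6 + 2*p \<le> k \<and> k < 6 + 3*p")
        case True
        then show ?thesis using F3
          by (subst sum_single[of _ "k - (6 + 2*p) + 1"]) (auto simp: L2f)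
      next
        case False
        then show ?thesis using F3 by (auto simp: L2f intro!: sum.neutral)
      qed
    qed
    finally show ?thesis .
  qed
  show ?thesis
    by (subst apply_layer_mlp_only) (auto simp: L2f MLq X2_def fun_eq_iff)
qed

lemma X2_simps:
  "X2 p s i 0 = 1" "X2 p s i 2 = isz (s ! i)" "X2 p s i 3 = ZC s i"
  "v < p \<Longrightarrow> X2 p s i (6 + 2*p + v) = Al s i v"
  "c < 2*p \<Longrightarrow> X2 p s i (6 + 4*p + c) = fval p (s ! i) c"
  "X2 p s i 5 = 0"
  "v < p \<Longrightarrow> X2 p s i (6 + 3*p + v) = 0"
  "c < 2*p \<Longrightarrow> X2 p s i (6 + 6*p + c) = 0"
  by (auto simp: X2_def X1_simps X1_def X0_def embM_def)

definition Zb :: "tok list \<Rightarrow> nat \<Rightarrow> real" where "Zb s j = ZC s j - isZ s j"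

definition ch :: "nat \<Rightarrow> real \<Rightarrow> tok list \<Rightarrow> nat \<Rightarrow> nat \<Rightarrow> real" where
  "ch p \<beta> s i c = (\<Sum>j\<le>i. exp (\<beta> * Zb s j) * fval p (s ! j) c) / (\<Sum>j\<le>i. exp (\<beta> * Zb s j))"

definition X3 :: "nat \<Rightarrow> real \<Rightarrow> tok list \<Rightarrow> nat \<Rightarrow> nat \<Rightarrow> real" where
  "X3 p \<beta> s i k = X2 p s i k + (if 6 + 6*p \<le> k \<and> k < 6 + 8*p then ch p \<beta> s i (k - (6 + 6*p)) else 0)"

lemma L3f: "dhead (L3 p \<beta>) = 2*p" "dmlp (L3 p \<beta>) = 0" "b2 (L3 p \<beta>) = (\<lambda>k. 0)"
  "WQ (L3 p \<beta>) h k a = (if k = 0 \<and> a = 0 then \<beta> * sqrt (real (2*p)) else 0)"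
  "WK (L3 p \<beta>) h k a = (if a = 0 then (if k = 3 then 1 else if k = 2 then -1 else 0) else 0)"
  "WV (L3 p \<beta>) h k c = (if k = 6 + 4*p + c then 1 else 0)"
  "WO (L3 p \<beta>) r k = (if r < 2*p \<and> k = 6 + 6*p + r then 1 else 0)"
  by (simp_all add: L3_def)

lemma layer3:
  assumes p: "1 \<le> p"
  shows "apply_layer (6 + 8*p) 5 (L3 p \<beta>) (X2 p s) = X3 p \<beta> s"
proof -
  let ?d = "6 + 8*p"
  have sq: "sqrt (real (2*p)) > 0" using p by simp
  have Q: "(\<Sum>k<?d. X2 p s i k * WQ (L3 p \<beta>) h k a) = (if a = 0 then \<beta> * sqrt (real (2*p)) else 0)" for i h a
    by (cases "a = 0") (simp_all add: L3f sum_delta_mult X2_simps)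
  have K0: "(\<Sum>k<?d. X2 p s j k * WK (L3 p \<beta>) h k 0) = Zb s j" for j h
  proof -
    have "(\<Sum>k<?d. X2 p s j k * WK (L3 p \<beta>) h k 0) =
          (\<Sum>k<?d. X2 p s j k * (if k = 3 then 1 else 0)) - (\<Sum>k<?d. X2 p s j k * (if k = 2 then 1 else 0))"
    proof -
      have "\<And>k. X2 p s j k * WK (L3 p \<beta>) h k 0 = X2 p s j k * (if k = 3 then 1 else 0) - X2 p s j k * (if k = 2 then 1 else 0)"
        by (simp add: L3f)
      then show ?thesis by (simp add: sum_subtractf)
    qed
    also have "\<dots> = Zb s j" by (simp add: sum_delta_mult X2_simps Zb_def isZ_def)
    finally show ?thesis .
  qed
  have SC: "attn_score ?d (L3 p \<beta>) (X2 p s) h i j = \<beta> * Zb s j" for h i j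
  proof -
    have "attn_score ?d (L3 p \<beta>) (X2 p s) h i j =
       (\<Sum>a<2*p. (if a = 0 then \<beta> * sqrt (real (2*p)) else 0) * (\<Sum>k<?d. X2 p s j k * WK (L3 p \<beta>) h k a)) / sqrt (real (2*p))"
      unfolding attn_score_def Q by (simp add: L3f)
    also have "\<dots> = (\<beta> * sqrt (real (2*p)) * Zb s j) / sqrt (real (2*p))"
      using p by (subst sum_single[of _ 0]) (auto simp: K0)
    also have "\<dots> = \<beta> * Zb s j" using sq by simp
    finally show ?thesis .
  qed
  have V: "(\<Sum>k<?d. X2 p s j k * WV (L3 p \<beta>) h k c) = fval p (s ! j) c" if "c < 2*p" for j h c
    using that by (simp add: L3f sum_delta_mult X2_simps)
  have AH: "attn_head ?d (L3 p \<beta>) (X2 p s) h i c = ch p \<beta> s i c" if "c < 2*p" for h i c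
    by (simp add: attn_head_def SC V that ch_def)
  have MH: "mha ?d 5 (L3 p \<beta>) (X2 p s) i k =
     (if 6 + 6*p \<le> k \<and> k < 6 + 8*p then ch p \<beta> s i (k - (6 + 6*p)) else 0)" for i k
  proof -
    let ?A = "\<lambda>c. attn_head ?d (L3 p \<beta>) (X2 p s) 0 i c * WO (L3 p \<beta>) c k"
    have "mha ?d 5 (L3 p \<beta>) (X2 p s) i k = (\<Sum>h<5. \<Sum>c<2*p. attn_head ?d (L3 p \<beta>) (X2 p s) h i c * WO (L3 p \<beta>) (h * (2*p) + c) k)"
      by (simp add: mha_def L3f)
    also have "\<dots> = (\<Sum>c<2*p. ?A c)"
    proof -
      have Z: "(\<Sum>c<2*p. attn_head ?d (L3 p \<beta>) (X2 p s) h i c * WO (L3 p \<beta>) (h * (2*p) + c) k) = 0"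
        if "h \<noteq> 0" for h
      proof (intro sum.neutral ballI)
        fix c assume "c \<in> {..<2*p}"
        have "h * (2*p) \<ge> 1 * (2*p)" using \<open>h \<noteq> 0\<close> by (intro mult_le_mono1) simp
        then have "\<not> h * (2*p) + c < 2 * p" by linarith
        then show "attn_head ?d (L3 p \<beta>) (X2 p s) h i c * WO (L3 p \<beta>) (h * (2*p) + c) k = 0"
          by (simp add: L3f)
      qed
      show ?thesis apply (rule trans[OF sum_single[of "{..<5}" 0]]) using Z by auto
    qed
    also have "\<dots> = (if 6 + 6*p \<le> k \<and> k < 6 + 8*p then ch p \<beta> s i (k - (6 + 6*p)) else 0)"
    proof (cases "6 + 6*p \<le> k \<and> k < 6 + 8*p")
      case True
      then show ?thesis
        by (subst sum_single[of _ "k - (6 + 6*p)"]) (auto simp: L3f AH)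
    next
      case False
      then show ?thesis by (auto simp: L3f intro!: sum.neutral)
    qed
    finally show ?thesis .
  qed
  show ?thesis
    by (subst apply_layer_attn_only) (auto simp: L3f MH X3_def fun_eq_iff)
qed

lemma X3_simps:
  "X3 p \<beta> s i 0 = 1" "X3 p \<beta> s i 2 = isz (s ! i)"
  "v < p \<Longrightarrow> X3 p \<beta> s i (6 + 2*p + v) = Al s i v"
  "c < 2*p \<Longrightarrow> X3 p \<beta> s i (6 + 6*p + c) = ch p \<beta> s i c"
  "X3 p \<beta> s i 5 = 0"
  "v < p \<Longrightarrow> X3 p \<beta> s i (6 + 3*p + v) = 0"
  by (auto simp: X3_def X2_simps)

definition zz :: "tok list \<Rightarrow> nat \<Rightarrow> nat \<Rightarrow> real" where
  "zz s i r = max 0 (1 - real r - Al s i r + (\<Sum>u<r. Al s i u))"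

definition X4 :: "nat \<Rightarrow> real \<Rightarrow> tok list \<Rightarrow> nat \<Rightarrow> nat \<Rightarrow> real" where
  "X4 p \<beta> s i k = X3 p \<beta> s i k + (if 6 + 3*p \<le> k \<and> k < 6 + 4*p then zz s i (k - (6 + 3*p)) else 0)"

lemma L4f: "dhead (L4 p) = 0" "dmlp (L4 p) = p" "b2 (L4 p) = (\<lambda>k. 0)"
  "b1 (L4 p) r = (if r < p then 1 else 1 - real (r - p))"
  "W1 (L4 p) q r = (if r < p then 0 else if q = 6 + 2*p + (r - p) then -1
                 else if 6 + 2*p \<le> q \<and> q < 6 + 2*p + (r - p) then 1 else 0)"
  "W2 (L4 p) r k = (if k = 6 + 3*p + r then 1 else 0)"
  by (simp_all add: L4_def)

lemma layer4: "apply_layer (6 + 8*p) 5 (L4 p) (X3 p \<beta> s) = X4 p \<beta> s"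
proof -
  let ?d = "6 + 8*p"
  define u where "u = (\<lambda>i r. (\<Sum>q<?d. X3 p \<beta> s i q * W1 (L4 p) q r) + b1 (L4 p) r)"
  have u1: "u i r = 1" if "r < p" for i r
    using that by (simp add: u_def L4f)
  have u2: "u i (p + r) = 1 - real r - Al s i r + (\<Sum>v<r. Al s i v)" if "r < p" for i r
  proof -
    have "\<And>q. X3 p \<beta> s i q * W1 (L4 p) q (p + r) =
       X3 p \<beta> s i q * (if 6 + 2*p \<le> q \<and> q < 6 + 2*p + r then (\<lambda>_. 1) (q - (6 + 2*p)) else 0)
       - X3 p \<beta> s i q * (if q = 6 + 2*p + r then 1 else 0)"
      by (simp add: L4f)
    then have "(\<Sum>q<?d. X3 p \<beta> s i q * W1 (L4 p) q (p + r)) =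
       (\<Sum>q<?d. X3 p \<beta> s i q * (if 6 + 2*p \<le> q \<and> q < 6 + 2*p + r then (\<lambda>_. 1) (q - (6 + 2*p)) else 0))
       - (\<Sum>q<?d. X3 p \<beta> s i q * (if q = 6 + 2*p + r then 1 else 0))"
      by (simp add: sum_subtractf)
    also have "\<dots> = (\<Sum>v<r. X3 p \<beta> s i (6 + 2*p + v) * 1) - X3 p \<beta> s i (6 + 2*p + r)"
      using that by (subst sum_range_mult) (auto simp: sum_delta_mult)
    also have "\<dots> = (\<Sum>v<r. Al s i v) - Al s i r"
      using that by (simp add: X3_simps)
    finally show ?thesis using that by (simp add: u_def L4f)
  qed
  have MLq: "mlp ?d (L4 p) (X3 p \<beta> s) i k =
     (if 6 + 3*p \<le> k \<and> k < 6 + 4*p then zz s i (k - (6 + 3*p)) else 0)" for i k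
  proof -
    have "mlp ?d (L4 p) (X3 p \<beta> s) i k = (\<Sum>r<p. (u i r * max 0 (u i (p + r))) * W2 (L4 p) r k)"
      by (simp add: mlp_def u_def L4f Let_def)
    also have "\<dots> = (\<Sum>r<p. zz s i r * (if k = 6 + 3*p + r then 1 else 0))"
      by (intro sum.cong refl) (simp add: u1 u2 zz_def L4f)
    also have "\<dots> = (if 6 + 3*p \<le> k \<and> k < 6 + 4*p then zz s i (k - (6 + 3*p)) else 0)"
    proof (cases "6 + 3*p \<le> k \<and> k < 6 + 4*p")
      case True
      then show ?thesis by (subst sum_single[of _ "k - (6 + 3*p)"]) auto
    next
      case False
      then show ?thesis by (auto intro!: sum.neutral)
    qed
    finally show ?thesis .
  qed
  show ?thesis
    by (subst apply_layer_mlp_only) (auto simp: L4f MLq X4_def fun_eq_iff)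
qed

lemma X4_simps:
  "X4 p \<beta> s i 0 = 1" "X4 p \<beta> s i 2 = isz (s ! i)"
  "v < p \<Longrightarrow> X4 p \<beta> s i (6 + 2*p + v) = Al s i v"
  "c < 2*p \<Longrightarrow> X4 p \<beta> s i (6 + 6*p + c) = ch p \<beta> s i c"
  "X4 p \<beta> s i 5 = 0"
  "v < p \<Longrightarrow> X4 p \<beta> s i (6 + 3*p + v) = zz s i v"
  by (auto simp: X4_def X3_simps)

definition Sc :: "nat \<Rightarrow> real \<Rightarrow> tok list \<Rightarrow> nat \<Rightarrow> nat \<Rightarrow> real" where
  "Sc p \<beta> s i j = (\<Sum>a<p. Al s i a * (ch p \<beta> s j a - ch p \<beta> s j (p + a))) + (\<Sum>v<p. ch p \<beta> s j (p + v))"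

definition Oo :: "nat \<Rightarrow> real \<Rightarrow> real \<Rightarrow> tok list \<Rightarrow> nat \<Rightarrow> real" where
  "Oo p \<beta> \<gamma> s i = (\<Sum>j\<le>i. exp (- \<gamma> * Sc p \<beta> s i j) * isz (s ! j)) / (\<Sum>j\<le>i. exp (- \<gamma> * Sc p \<beta> s i j))"

definition X5 :: "nat \<Rightarrow> real \<Rightarrow> real \<Rightarrow> tok list \<Rightarrow> nat \<Rightarrow> nat \<Rightarrow> real" where
  "X5 p \<beta> \<gamma> s i k = X4 p \<beta> s i k + (if k = 5 then Oo p \<beta> \<gamma> s i else 0)"

lemma L5f: "dhead (L5 p \<gamma>) = p + 1" "dmlp (L5 p \<gamma>) = 0" "b2 (L5 p \<gamma>) = (\<lambda>k. 0)"
  "WQ (L5 p \<gamma>) h k a = (if a < p then (if k = 6 + 2*p + a then 1 else 0) else if k = 0 then 1 else 0)"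
  "WK (L5 p \<gamma>) h k a = - (\<gamma> * sqrt (real (p + 1))) *
             (if a < p then (if k = 6 + 6*p + a then 1 else if k = 6 + 7*p + a then -1 else 0)
              else if 6 + 7*p \<le> k \<and> k < 6 + 8*p then 1 else 0)"
  "WV (L5 p \<gamma>) h k c = (if c = 0 \<and> k = 2 then 1 else 0)"
  "WO (L5 p \<gamma>) r k = (if r = 0 \<and> k = 5 then 1 else 0)"
  by (simp_all add: L5_def)

lemma dbl_delta: "(\<Sum>h<(5::nat). \<Sum>c<(p::nat)+1. (if h = 0 then (if c = 0 then x else 0) else 0)) = (x::real)"
proof -
  have X: "(\<Sum>c<(p::nat)+1. (if c = 0 then x else 0)) = x" by (rule trans[OF sum_single[of "{..<p+1}" 0]]) auto
  show ?thesis apply (rule trans[OF sum_single[of "{..<5::nat}" 0]]) using X by auto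
qed

lemma layer5: "apply_layer (6 + 8*p) 5 (L5 p \<gamma>) (X4 p \<beta> s) = X5 p \<beta> \<gamma> s"
proof -
  let ?d = "6 + 8*p"
  let ?g = "\<gamma> * sqrt (real (p + 1))"
  have sq: "sqrt (real (p + 1)) > 0" by simp
  have Q: "(\<Sum>k<?d. X4 p \<beta> s i k * WQ (L5 p \<gamma>) h k a) = (if a < p then Al s i a else 1)" if "a < p + 1" for i h a
    using that by (cases "a < p") (simp_all add: L5f sum_delta_mult X4_simps)
  have K1: "(\<Sum>k<?d. X4 p \<beta> s j k * WK (L5 p \<gamma>) h k a) = - ?g * (ch p \<beta> s j a - ch p \<beta> s j (p + a))"
    if "a < p" for j h a
  proof -
    have "\<And>k. X4 p \<beta> s j k * WK (L5 p \<gamma>) h k a = - ?g * (X4 p \<beta> s j k * (if k = 6 + 6*p + a then 1 else 0)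
       - X4 p \<beta> s j k * (if k = 6 + 6*p + (p + a) then 1 else 0))"
      using that by (auto simp: L5f)
    then have "(\<Sum>k<?d. X4 p \<beta> s j k * WK (L5 p \<gamma>) h k a) = - ?g * ((\<Sum>k<?d. X4 p \<beta> s j k * (if k = 6 + 6*p + a then 1 else 0))
       - (\<Sum>k<?d. X4 p \<beta> s j k * (if k = 6 + 6*p + (p + a) then 1 else 0)))"
      by (simp add: sum_subtractf sum_distrib_left[symmetric] sum_negf)
    also have "\<dots> = - ?g * (X4 p \<beta> s j (6 + 6*p + a) - X4 p \<beta> s j (6 + 6*p + (p + a)))"
      using that by (simp only: sum_delta_mult) simp
    also have "\<dots> = - ?g * (ch p \<beta> s j a - ch p \<beta> s j (p + a))"
      using that by (simp only: X4_simps(4))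
    finally show ?thesis .
  qed
  have K2: "(\<Sum>k<?d. X4 p \<beta> s j k * WK (L5 p \<gamma>) h k p) = - ?g * (\<Sum>v<p. ch p \<beta> s j (p + v))" for j h
  proof -
    have "\<And>k. X4 p \<beta> s j k * WK (L5 p \<gamma>) h k p = - ?g * (X4 p \<beta> s j k * (if 6 + 7*p \<le> k \<and> k < 6 + 7*p + p then (\<lambda>_. 1) (k - (6 + 7*p)) else 0))"
      by (auto simp: L5f)
    then have "(\<Sum>k<?d. X4 p \<beta> s j k * WK (L5 p \<gamma>) h k p) = - ?g * (\<Sum>k<?d. X4 p \<beta> s j k * (if 6 + 7*p \<le> k \<and> k < 6 + 7*p + p then (\<lambda>_. 1) (k - (6 + 7*p)) else 0))"
      by (simp add: sum_distrib_left[symmetric] sum_negf)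
    also have "\<dots> = - ?g * (\<Sum>v<p. X4 p \<beta> s j (6 + 7*p + v) * 1)"
      by (subst sum_range_mult) auto
    also have "\<dots> = - ?g * (\<Sum>v<p. ch p \<beta> s j (p + v))"
    proof -
      have "\<And>v. v < p \<Longrightarrow> X4 p \<beta> s j (6 + 7*p + v) = ch p \<beta> s j (p + v)"
        using X4_simps(4)[of "p + v" p \<beta> s j for v] by (simp add: add.assoc)
      then show ?thesis by simp
    qed
    finally show ?thesis .
  qed
  have SC: "attn_score ?d (L5 p \<gamma>) (X4 p \<beta> s) h i j = - \<gamma> * Sc p \<beta> s i j" for h i j
  proof -
    have "attn_score ?d (L5 p \<gamma>) (X4 p \<beta> s) h i j =
       (\<Sum>a<p+1. (if a < p then Al s i a else 1) * (\<Sum>k<?d. X4 p \<beta> s j k * WK (L5 p \<gamma>) h k a)) / sqrt (real (p+1))"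
      unfolding attn_score_def using Q by (simp add: L5f del: sum.lessThan_Suc)
    also have "\<dots> = ((\<Sum>a<p. Al s i a * (- ?g * (ch p \<beta> s j a - ch p \<beta> s j (p + a)))) + - ?g * (\<Sum>v<p. ch p \<beta> s j (p + v))) / sqrt (real (p+1))"
      by (simp add: K1 K2)
    also have "\<dots> = (- ?g * (\<Sum>a<p. Al s i a * (ch p \<beta> s j a - ch p \<beta> s j (p + a))) + - ?g * (\<Sum>v<p. ch p \<beta> s j (p + v))) / sqrt (real (p+1))"
      by (simp only: sum_distrib_left mult.left_commute[of "Al s i _"])
    also have "\<dots> = - \<gamma> * Sc p \<beta> s i j"
      using sq unfolding Sc_def by (simp add: field_simps)
    finally show ?thesis .
  qed
  have V: "(\<Sum>k<?d. X4 p \<beta> s j k * WV (L5 p \<gamma>) h k 0) = isz (s ! j)" for j h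
    by (simp add: L5f sum_delta_mult X4_simps)
  have AH: "attn_head ?d (L5 p \<gamma>) (X4 p \<beta> s) h i 0 = Oo p \<beta> \<gamma> s i" for h i
    by (simp add: attn_head_def SC V Oo_def)
  have MH: "mha ?d 5 (L5 p \<gamma>) (X4 p \<beta> s) i k = (if k = 5 then Oo p \<beta> \<gamma> s i else 0)" for i k
  proof -
    have "mha ?d 5 (L5 p \<gamma>) (X4 p \<beta> s) i k = (\<Sum>h<5. \<Sum>c<p+1. attn_head ?d (L5 p \<gamma>) (X4 p \<beta> s) h i c * WO (L5 p \<gamma>) (h * (p+1) + c) k)"
      by (simp add: mha_def L5f)
    also have "\<dots> = (\<Sum>h<(5::nat). \<Sum>c<p+1. (if h = 0 then (if c = 0 then attn_head ?d (L5 p \<gamma>) (X4 p \<beta> s) 0 i 0 * (if k = 5 then 1 else 0) else 0) else 0))"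
      by (intro sum.cong refl) (auto simp: L5f)
    also have "\<dots> = (if k = 5 then Oo p \<beta> \<gamma> s i else 0)"
      by (subst dbl_delta) (simp add: AH)
    finally show ?thesis .
  qed
  show ?thesis
    by (subst apply_layer_attn_only) (auto simp: L5f MH X5_def fun_eq_iff)
qed

lemma X5_simps:
  "X5 p \<beta> \<gamma> s i 5 = Oo p \<beta> \<gamma> s i"
  "v < p \<Longrightarrow> X5 p \<beta> \<gamma> s i (6 + 3*p + v) = zz s i v"
  by (auto simp: X5_def X4_simps)

lemma layer0: "apply_layer d H L0 X = X"
  by (simp add: apply_layer_def L0_def mlp_def mha_def)

lemma forward_Mdl:
  assumes "1 \<le> p"
  shows "forward (Mdl p \<beta> \<gamma> K \<theta>) s = X5 p \<beta> \<gamma> s"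
  using assms
  by (simp add: forward_def embed_Mdl layer0 layer5 layer4 layer3 layer2 layer1 del: fold_simps)
     (simp add: Mdl_def layer0 layer5 layer4 layer3 layer2 layer1 embed_Mdl)

lemma Mdl_f: "dim (Mdl p \<beta> \<gamma> K \<theta>) = 6 + 8*p" "vocab (Mdl p \<beta> \<gamma> K \<theta>) = vocabM p"
  "nheads (Mdl p \<beta> \<gamma> K \<theta>) = 5" "pos_coord (Mdl p \<beta> \<gamma> K \<theta>) = 1"
  "layers (Mdl p \<beta> \<gamma> K \<theta>) = [L1 p, L2 p, L3 p \<beta>, L4 p, L5 p \<gamma>, L0, L0]"
  "Wout (Mdl p \<beta> \<gamma> K \<theta>) = (\<lambda>k j. if j = 1 \<and> k = 5 then - K
                   else if 2 \<le> j \<and> j < p + 2 \<and> k = 6 + 3*p + (j - 2) then 1 else 0)"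
  "bout (Mdl p \<beta> \<gamma> K \<theta>) = (\<lambda>j. if j = 0 then 1/2 else if j = 1 then K * \<theta> else if j < p + 2 then 0 else -1)"
  by (simp_all add: Mdl_def)

lemma logits_Mdl:
  assumes "1 \<le> p"
  shows "logits (Mdl p \<beta> \<gamma> K \<theta>) s j =
    (if j = 0 then 1/2 else if j = 1 then K * \<theta> - K * Oo p \<beta> \<gamma> s (length s - 1)
     else if j < p + 2 then zz s (length s - 1) (j - 2) else -1)"
proof -
  let ?i = "length s - 1"
  have "logits (Mdl p \<beta> \<gamma> K \<theta>) s j = (\<Sum>k<6 + 8*p. X5 p \<beta> \<gamma> s ?i k *
     (if j = 1 \<and> k = 5 then - K else if 2 \<le> j \<and> j < p + 2 \<and> k = 6 + 3*p + (j - 2) then 1 else 0))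
     + (if j = 0 then 1/2 else if j = 1 then K * \<theta> else if j < p + 2 then 0 else -1)"
    using assms unfolding logits_def forward_Mdl[OF assms] by (simp only: Mdl_f)
  also have "\<dots> = (if j = 0 then 1/2 else if j = 1 then K * \<theta> - K * Oo p \<beta> \<gamma> s ?i
     else if j < p + 2 then zz s ?i (j - 2) else -1)"
  proof (cases "j = 1")
    case True
    have "(\<Sum>k<6 + 8*p. X5 p \<beta> \<gamma> s ?i k *
     (if j = 1 \<and> k = 5 then - K else if 2 \<le> j \<and> j < p + 2 \<and> k = 6 + 3*p + (j - 2) then 1 else 0))
     = (\<Sum>k<6 + 8*p. X5 p \<beta> \<gamma> s ?i k * (if k = 5 then - K else 0))"
      using True by (intro sum.cong refl) auto
    also have "\<dots> = - K * Oo p \<beta> \<gamma> s ?i" by (simp add: sum_delta_mult X5_simps)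
    finally show ?thesis using True by simp
  next
    case F1: False
    show ?thesis
    proof (cases "2 \<le> j \<and> j < p + 2")
      case True
      then have "(\<Sum>k<6 + 8*p. X5 p \<beta> \<gamma> s ?i k *
         (if j = 1 \<and> k = 5 then - K else if 2 \<le> j \<and> j < p + 2 \<and> k = 6 + 3*p + (j - 2) then 1 else 0))
         = (\<Sum>k<6 + 8*p. X5 p \<beta> \<gamma> s ?i k * (if k = 6 + 3*p + (j - 2) then 1 else 0))"
        using F1 by (intro sum.cong refl) auto
      also have "\<dots> = X5 p \<beta> \<gamma> s ?i (6 + 3*p + (j - 2))" using True by (simp only: sum_delta_mult) simp
      also have "\<dots> = zz s ?i (j - 2)" using True by (intro X5_simps) auto
      finally show ?thesis using True F1 by simp
    next
      case False
      then show ?thesis using F1 by (auto intro!: sum.neutral)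
    qed
  qed
  finally show ?thesis .
qed

section \<open>Counting clause separators\<close>

definition Zn :: "tok list \<Rightarrow> nat \<Rightarrow> nat" where
  "Zn s j = length (filter (\<lambda>t. t = Lit 0) (take j s))"

lemma Zn_append: "Zn (xs @ ys) j = Zn xs j + Zn ys (j - length xs)"
  by (simp add: Zn_def)

lemma Zn_mono: "j \<le> j' \<Longrightarrow> Zn s j \<le> Zn s j'"
proof -
  assume "j \<le> j'"
  then have "take j' s = take j s @ drop j (take j' s)"
    by (metis append_take_drop_id min.absorb1 take_take)
  then have "length (filter (\<lambda>t. t = Lit 0) (take j' s)) =
     length (filter (\<lambda>t. t = Lit 0) (take j s)) + length (filter (\<lambda>t. t = Lit 0) (drop j (take j' s)))"
    by (metis filter_append length_append)
  then show ?thesis by (simp add: Zn_def)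
qed

lemma Zn_Suc: "j < length s \<Longrightarrow> Zn s (Suc j) = Zn s j + (if s ! j = Lit 0 then 1 else 0)"
  by (simp add: Zn_def take_Suc_conv_app_nth)

lemma Zb_Zn: "j < length s \<Longrightarrow> Zb s j = real (Zn s j)"
proof -
  have "(\<Sum>j'<j. isz (s ! j')) = real (Zn s j)" if "j \<le> length s" for j
    using that
  proof (induction j)
    case 0
    then show ?case by (simp add: Zn_def)
  next
    case (Suc j)
    then show ?case by (simp add: Zn_Suc isz_def)
  qed
  moreover assume "j < length s"
  moreover have "Zb s j = (\<Sum>j'<j. isz (s ! j'))"
    by (simp add: Zb_def ZC_def isZ_def lessThan_Suc_atMost[symmetric])
  ultimately show ?thesis by simp
qed

definition memberL :: "tok list \<Rightarrow> nat \<Rightarrow> int \<Rightarrow> bool" where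
  "memberL s z l \<longleftrightarrow> (\<exists>j\<le>z. s ! j = Lit l \<and> Zn s j = Zn s z)"

lemma fval_nonneg: "0 \<le> fval p t c" by (simp add: fval_def)

lemma ch_nonneg: "0 \<le> ch p \<beta> s i c"
  unfolding ch_def by (intro divide_nonneg_nonneg sum_nonneg) (auto simp: fval_def)

lemma ch_BOS: "s ! 0 = BOS \<Longrightarrow> ch p \<beta> s 0 c = 0"
  by (simp add: ch_def fval_def)

lemma ch_member:
  assumes "z < length s" "0 \<le> \<beta>" "memberL s z (litOf p c)"
  shows "ch p \<beta> s z c \<ge> 1 / real (Suc z)"
proof -
  obtain j0 where j0: "j0 \<le> z" "s ! j0 = Lit (litOf p c)" "Zn s j0 = Zn s z"
    using assms(3) by (auto simp: memberL_def)
  let ?E = "exp (\<beta> * real (Zn s z))"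
  have Zbj: "Zb s j = real (Zn s j)" if "j \<le> z" for j using that assms(1) by (intro Zb_Zn) simp
  have num: "(\<Sum>j\<le>z. exp (\<beta> * Zb s j) * fval p (s ! j) c) \<ge> ?E"
  proof -
    have "?E = exp (\<beta> * Zb s j0) * fval p (s ! j0) c"
      using j0 Zbj[of j0] by (simp add: fval_def)
    also have "\<dots> \<le> (\<Sum>j\<le>z. exp (\<beta> * Zb s j) * fval p (s ! j) c)"
      by (rule member_le_sum) (use j0 in \<open>auto simp: fval_def\<close>)
    finally show ?thesis .
  qed
  have den: "(\<Sum>j\<le>z. exp (\<beta> * Zb s j)) \<le> real (Suc z) * ?E"
  proof -
    have "(\<Sum>j\<le>z. exp (\<beta> * Zb s j)) \<le> (\<Sum>j\<le>z. ?E)"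
    proof (rule sum_mono)
      fix j assume "j \<in> {..z}"
      then have "Zn s j \<le> Zn s z" by (intro Zn_mono) simp
      then show "exp (\<beta> * Zb s j) \<le> ?E"
        using \<open>j \<in> {..z}\<close> Zbj[of j] assms(2) by (simp add: mult_left_mono)
    qed
    then show ?thesis by simp
  qed
  have dpos: "(\<Sum>j\<le>z. exp (\<beta> * Zb s j)) > 0" by (intro sum_pos) auto
  have "1 / real (Suc z) = ?E / (real (Suc z) * ?E)" by simp
  also have "\<dots> \<le> ?E / (\<Sum>j\<le>z. exp (\<beta> * Zb s j))"
    using den dpos by (intro divide_left_mono) auto
  also have "\<dots> \<le> ch p \<beta> s z c"
    unfolding ch_def using num dpos by (intro divide_right_mono) auto
  finally show ?thesis .
qed

lemma ch_nonmember:
  assumes "z < length s" "0 \<le> \<beta>" "\<not> memberL s z (litOf p c)"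
  shows "ch p \<beta> s z c \<le> real (Suc z) * exp (- \<beta>)"
proof -
  let ?E = "exp (\<beta> * real (Zn s z))"
  have Zbj: "Zb s j = real (Zn s j)" if "j \<le> z" for j using that assms(1) by (intro Zb_Zn) simp
  have num: "(\<Sum>j\<le>z. exp (\<beta> * Zb s j) * fval p (s ! j) c) \<le> real (Suc z) * (?E * exp (- \<beta>))"
  proof -
    have "(\<Sum>j\<le>z. exp (\<beta> * Zb s j) * fval p (s ! j) c) \<le> (\<Sum>j\<le>z. ?E * exp (- \<beta>))"
    proof (rule sum_mono)
      fix j assume j: "j \<in> {..z}"
      show "exp (\<beta> * Zb s j) * fval p (s ! j) c \<le> ?E * exp (- \<beta>)"
      proof (cases "s ! j = Lit (litOf p c)")
        case True
        then have "Zn s j \<noteq> Zn s z" using assms(3) j by (auto simp: memberL_def)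
        moreover have "Zn s j \<le> Zn s z" using j by (intro Zn_mono) simp
        ultimately have "real (Zn s j) \<le> real (Zn s z) - 1" by linarith
        then have "\<beta> * real (Zn s j) \<le> \<beta> * real (Zn s z) + - \<beta>"
          using assms(2) by (metis add_uminus_conv_diff mult_left_mono right_diff_distrib' mult.right_neutral)
        then have "exp (\<beta> * real (Zn s j)) \<le> exp (\<beta> * real (Zn s z) + - \<beta>)" by simp
        then show ?thesis using True Zbj[of j] j by (simp add: fval_def exp_add[symmetric])
      next
        case False
        then show ?thesis by (simp add: fval_def)
      qed
    qed
    then show ?thesis by simp
  qed
  have den: "(\<Sum>j\<le>z. exp (\<beta> * Zb s j)) \<ge> ?E"
  proof -
    have "?E = exp (\<beta> * Zb s z)" using Zbj[of z] by simp
    also have "\<dots> \<le> (\<Sum>j\<le>z. exp (\<beta> * Zb s j))" by (rule member_le_sum) auto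
    finally show ?thesis .
  qed
  have Epos: "?E > 0" by simp
  have "ch p \<beta> s z c \<le> (real (Suc z) * (?E * exp (- \<beta>))) / ?E"
    unfolding ch_def using num den Epos
    by (meson divide_mono exp_ge_zero mult_nonneg_nonneg of_nat_0_le_iff order_trans sum_nonneg fval_nonneg)
  also have "\<dots> = real (Suc z) * exp (- \<beta>)" using Epos by simp
  finally show ?thesis .
qed

definition blk :: "int list \<Rightarrow> tok list" where "blk C = map Lit C @ [Lit 0]"
definition PF :: "int list list \<Rightarrow> tok list" where "PF F = BOS # concat (map blk F)"

lemma dimacs_PF: "dimacs F = PF F @ [SEP]"
  by (simp add: dimacs_def PF_def blk_def[abs_def])

lemma PF_snoc: "PF (F @ [C]) = PF F @ blk C"
  by (simp add: PF_def)

lemma Zn_ge: "length xs \<le> j \<Longrightarrow> Zn xs j = Zn xs (length xs)"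
  by (simp add: Zn_def)

lemma Zn_0[simp]: "Zn s 0 = 0" by (simp add: Zn_def)

lemma memberL_append:
  assumes "z < length t" shows "memberL (t @ r) z l = memberL t z l"
proof -
  have "(t @ r) ! j = t ! j \<and> Zn (t @ r) j = Zn t j" if "j \<le> z" for j
    using that assms by (simp add: nth_append Zn_append)
  then show ?thesis unfolding memberL_def by (metis order_refl)
qed

lemma Zn_blk: "q \<le> length C \<Longrightarrow> 0 \<notin> set C \<Longrightarrow> Zn (blk C) q = 0"
  by (auto simp: Zn_def blk_def filter_empty_conv dest: in_set_takeD)

lemma Zn_blk_full: "0 \<notin> set C \<Longrightarrow> Zn (blk C) (Suc (length C)) = 1"
proof -
  assume "0 \<notin> set C"
  then have "filter (\<lambda>t. t = Lit 0) (map Lit C) = []" by (auto simp: filter_empty_conv)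
  then show ?thesis by (simp add: Zn_def blk_def)
qed

lemma PF_props:
  assumes "\<forall>C\<in>set F. 0 \<notin> set C"
  shows "(\<forall>j<length (PF F). PF F ! j \<noteq> BOS \<longrightarrow> Zn (PF F) j < Zn (PF F) (length (PF F))) \<and>
    (\<forall>z<length (PF F). PF F ! z = Lit 0 \<longrightarrow> (\<exists>C\<in>set F. \<forall>l. l \<noteq> 0 \<longrightarrow> (memberL (PF F) z l \<longleftrightarrow> l \<in> set C))) \<and>
    (\<forall>C\<in>set F. \<exists>z<length (PF F). PF F ! z = Lit 0 \<and> (\<forall>l. l \<noteq> 0 \<longrightarrow> (memberL (PF F) z l \<longleftrightarrow> l \<in> set C)))"
  using assms
proof (induction F rule: rev_induct)
  case Nil
  then show ?case by (simp add: PF_def)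
next
  case (snoc C F)
  let ?t = "PF F" and ?t' = "PF (F @ [C])"
  let ?L = "length ?t" and ?m = "length C"
  have C0: "0 \<notin> set C" using snoc.prems by simp
  have IH: "(\<forall>j<?L. ?t ! j \<noteq> BOS \<longrightarrow> Zn ?t j < Zn ?t ?L)"
    "(\<forall>z<?L. ?t ! z = Lit 0 \<longrightarrow> (\<exists>C\<in>set F. \<forall>l. l \<noteq> 0 \<longrightarrow> (memberL ?t z l \<longleftrightarrow> l \<in> set C)))"
    "(\<forall>C\<in>set F. \<exists>z<?L. ?t ! z = Lit 0 \<and> (\<forall>l. l \<noteq> 0 \<longrightarrow> (memberL ?t z l \<longleftrightarrow> l \<in> set C)))"
    using snoc by auto
  have t': "?t' = ?t @ blk C" by (rule PF_snoc)
  have len: "length ?t' = ?L + ?m + 1" by (simp add: t' blk_def)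
  have nth1: "?t' ! j = ?t ! j" if "j < ?L" for j using that by (simp add: t' nth_append)
  have nth2: "?t' ! (?L + q) = Lit (C ! q)" if "q < ?m" for q using that by (simp add: t' nth_append blk_def)
  have nth3: "?t' ! (?L + ?m) = Lit 0" by (simp add: t' nth_append blk_def)
  have Zn1: "Zn ?t' j = Zn ?t j" if "j \<le> ?L" for j using that by (simp add: t' Zn_append)
  have Zn2: "Zn ?t' (?L + q) = Zn ?t ?L" if "q \<le> ?m" for q
    using that C0 Zn_ge[of ?t "?L + q"] by (simp add: t' Zn_append Zn_blk)
  have Zn3: "Zn ?t' (length ?t') = Zn ?t ?L + 1"
    using C0 Zn_ge[of ?t "length ?t'"] len by (simp add: t' Zn_append Zn_blk_full)
  have ZtL: "Zn ?t j \<le> Zn ?t ?L" for j by (cases "j \<le> ?L") (auto intro: Zn_mono simp: Zn_ge[of ?t j])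
  have mem_new: "memberL ?t' (?L + ?m) l \<longleftrightarrow> l \<in> set C" if "l \<noteq> 0" for l
  proof
    assume "memberL ?t' (?L + ?m) l"
    then obtain j where j: "j \<le> ?L + ?m" "?t' ! j = Lit l" "Zn ?t' j = Zn ?t' (?L + ?m)"
      by (auto simp: memberL_def)
    have zz: "Zn ?t' (?L + ?m) = Zn ?t ?L" using Zn2[of ?m] by simp
    show "l \<in> set C"
    proof (cases "j < ?L")
      case True
      then have "?t ! j \<noteq> BOS" using j nth1 by auto
      then have "Zn ?t j < Zn ?t ?L" using IH(1) True by auto
      then show ?thesis using j zz Zn1[of j] True by simp
    next
      case False
      show ?thesis
      proof (cases "j = ?L + ?m")
        case True
        then show ?thesis using j nth3 that by simp
      next
        case False
        have "j = ?L + (j - ?L)" "j - ?L < ?m" using \<open>\<not> j < ?L\<close> j(1) False by auto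
        then obtain q where "j = ?L + q" "q < ?m" by blast
        then show ?thesis using j nth2 by auto
      qed
    qed
  next
    assume "l \<in> set C"
    then obtain q where q: "q < ?m" "C ! q = l" by (auto simp: in_set_conv_nth)
    show "memberL ?t' (?L + ?m) l"
      unfolding memberL_def
      using q nth2[of q] Zn2[of q] Zn2[of ?m] by (intro exI[of _ "?L + q"]) auto
  qed
  have A: "\<forall>j<length ?t'. ?t' ! j \<noteq> BOS \<longrightarrow> Zn ?t' j < Zn ?t' (length ?t')"
  proof (intro allI impI)
    fix j assume j: "j < length ?t'" "?t' ! j \<noteq> BOS"
    show "Zn ?t' j < Zn ?t' (length ?t')"
    proof (cases "j < ?L")
      case True
      then show ?thesis using Zn1[of j] Zn3 ZtL[of j] by simp
    next
      case False
      have "j = ?L + (j - ?L)" "j - ?L \<le> ?m" using j(1) len False by auto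
      then obtain q where "j = ?L + q" "q \<le> ?m" by blast
      then show ?thesis using Zn2[of q] Zn3 by simp
    qed
  qed
  have B: "\<forall>z<length ?t'. ?t' ! z = Lit 0 \<longrightarrow> (\<exists>C'\<in>set (F @ [C]). \<forall>l. l \<noteq> 0 \<longrightarrow> (memberL ?t' z l \<longleftrightarrow> l \<in> set C'))"
  proof (intro allI impI)
    fix z assume z: "z < length ?t'" "?t' ! z = Lit 0"
    show "\<exists>C'\<in>set (F @ [C]). \<forall>l. l \<noteq> 0 \<longrightarrow> (memberL ?t' z l \<longleftrightarrow> l \<in> set C')"
    proof (cases "z < ?L")
      case True
      then have "?t ! z = Lit 0" using z nth1 by simp
      then obtain C' where "C' \<in> set F" "\<forall>l. l \<noteq> 0 \<longrightarrow> (memberL ?t z l \<longleftrightarrow> l \<in> set C')"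
        using IH(2) True by blast
      then show ?thesis using True memberL_append[of z ?t "blk C"] t' by auto
    next
      case False
      have "z = ?L + ?m"
      proof (rule ccontr)
        assume "z \<noteq> ?L + ?m"
        have "z = ?L + (z - ?L)" "z - ?L < ?m" using False z(1) len \<open>z \<noteq> ?L + ?m\<close> by auto
        then obtain q where q: "z = ?L + q" "q < ?m" by blast
        then have "C ! q = 0" using z nth2 by auto
        then show False using q C0 nth_mem[of q C] by auto
      qed
      then show ?thesis using mem_new by auto
    qed
  qed
  have C: "\<forall>C'\<in>set (F @ [C]). \<exists>z<length ?t'. ?t' ! z = Lit 0 \<and> (\<forall>l. l \<noteq> 0 \<longrightarrow> (memberL ?t' z l \<longleftrightarrow> l \<in> set C'))"
  proof
    fix C' assume "C' \<in> set (F @ [C])"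
    then consider "C' \<in> set F" | "C' = C" by auto
    then show "\<exists>z<length ?t'. ?t' ! z = Lit 0 \<and> (\<forall>l. l \<noteq> 0 \<longrightarrow> (memberL ?t' z l \<longleftrightarrow> l \<in> set C'))"
    proof cases
      case 1
      then obtain z where "z < ?L" "?t ! z = Lit 0" "\<forall>l. l \<noteq> 0 \<longrightarrow> (memberL ?t z l \<longleftrightarrow> l \<in> set C')"
        using IH(3) by blast
      then show ?thesis using memberL_append[of z ?t "blk C"] t' nth1 len
        by (intro exI[of _ z]) auto
    next
      case 2
      then show ?thesis using mem_new nth3 len by (intro exI[of _ "?L + ?m"]) auto
    qed
  qed
  show ?case using A B C by blast
qed

lemma PF_nth0: "PF F ! 0 = BOS" by (simp add: PF_def)

lemma clauses_D1:
  assumes "\<forall>C\<in>set F. 0 \<notin> set C" "Lit 0 \<notin> set r" "z < length (PF F @ r)" "(PF F @ r) ! z = Lit 0"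
  shows "\<exists>C\<in>set F. \<forall>l. l \<noteq> 0 \<longrightarrow> (memberL (PF F @ r) z l \<longleftrightarrow> l \<in> set C)"
proof -
  have zl: "z < length (PF F)"
  proof (rule ccontr)
    assume "\<not> z < length (PF F)"
    then have "(PF F @ r) ! z = r ! (z - length (PF F))" "z - length (PF F) < length r"
      using assms(3) by (auto simp: nth_append)
    then show False using assms(2,4) nth_mem by metis
  qed
  then have "PF F ! z = Lit 0" using assms(4) by (simp add: nth_append)
  then obtain C where "C \<in> set F" "\<forall>l. l \<noteq> 0 \<longrightarrow> (memberL (PF F) z l \<longleftrightarrow> l \<in> set C)"
    using PF_props[OF assms(1)] zl by blast
  then show ?thesis using memberL_append[OF zl] by auto
qed

lemma clauses_D2:
  assumes "\<forall>C\<in>set F. 0 \<notin> set C" "C \<in> set F"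
  shows "\<exists>z<length (PF F @ r). (PF F @ r) ! z = Lit 0 \<and> (\<forall>l. l \<noteq> 0 \<longrightarrow> (memberL (PF F @ r) z l \<longleftrightarrow> l \<in> set C))"
proof -
  obtain z where "z < length (PF F)" "PF F ! z = Lit 0" "\<forall>l. l \<noteq> 0 \<longrightarrow> (memberL (PF F) z l \<longleftrightarrow> l \<in> set C)"
    using PF_props[OF assms(1)] assms(2) by blast
  then show ?thesis using memberL_append[of z "PF F" r] by (intro exI[of _ z]) (auto simp: nth_append)
qed

section \<open>Analysis of the final attention layer\<close>

lemma Sc_form:
  assumes "\<forall>v<p. Al s i v = (if b v then 1 else 0)"
  shows "Sc p \<beta> s i j = (\<Sum>v<p. if b v then ch p \<beta> s j v else ch p \<beta> s j (p + v))"
proof -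
  have "Sc p \<beta> s i j = (\<Sum>v<p. Al s i v * (ch p \<beta> s j v - ch p \<beta> s j (p + v)) + ch p \<beta> s j (p + v))"
    by (simp add: Sc_def sum.distrib)
  also have "\<dots> = (\<Sum>v<p. if b v then ch p \<beta> s j v else ch p \<beta> s j (p + v))"
    using assms by (intro sum.cong refl) auto
  finally show ?thesis .
qed

lemma Sc_nonneg:
  assumes "\<forall>v<p. Al s i v = (if b v then 1 else 0)"
  shows "0 \<le> Sc p \<beta> s i j"
  unfolding Sc_form[OF assms] by (intro sum_nonneg) (auto intro: ch_nonneg)

lemma Sc_BOS:
  assumes "\<forall>v<p. Al s i v = (if b v then 1 else 0)" "s ! 0 = BOS"
  shows "Sc p \<beta> s i 0 = 0"
  unfolding Sc_form[OF assms(1)] using assms(2) by (intro sum.neutral) (simp add: ch_BOS)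

lemma Oo_upper:
  assumes A: "\<forall>v<p. Al s i v = (if b v then 1 else 0)" and B: "s ! 0 = BOS" and g: "0 \<le> \<gamma>"
    and Z: "\<forall>z\<le>i. s ! z = Lit 0 \<longrightarrow> Sc p \<beta> s i z \<ge> \<delta>"
  shows "Oo p \<beta> \<gamma> s i \<le> real (Suc i) * exp (- \<gamma> * \<delta>)"
proof -
  have num: "(\<Sum>j\<le>i. exp (- \<gamma> * Sc p \<beta> s i j) * isz (s ! j)) \<le> (\<Sum>j\<le>i. exp (- \<gamma> * \<delta>))"
  proof (rule sum_mono)
    fix j assume j: "j \<in> {..i}"
    show "exp (- \<gamma> * Sc p \<beta> s i j) * isz (s ! j) \<le> exp (- \<gamma> * \<delta>)"
    proof (cases "s ! j = Lit 0")
      case True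
      then have "Sc p \<beta> s i j \<ge> \<delta>" using Z j by auto
      then have "- \<gamma> * Sc p \<beta> s i j \<le> - \<gamma> * \<delta>" using g by (simp add: mult_left_mono)
      then show ?thesis using True by (simp add: isz_def)
    next
      case False
      then show ?thesis by (simp add: isz_def)
    qed
  qed
  have den: "(\<Sum>j\<le>i. exp (- \<gamma> * Sc p \<beta> s i j)) \<ge> 1"
  proof -
    have "1 = exp (- \<gamma> * Sc p \<beta> s i 0)" using Sc_BOS[OF A B] by simp
    also have "\<dots> \<le> (\<Sum>j\<le>i. exp (- \<gamma> * Sc p \<beta> s i j))" by (rule member_le_sum) auto
    finally show ?thesis .
  qed
  have nn: "0 \<le> (\<Sum>j\<le>i. exp (- \<gamma> * Sc p \<beta> s i j) * isz (s ! j))"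
    by (intro sum_nonneg) (auto simp: isz_def)
  have "Oo p \<beta> \<gamma> s i \<le> (\<Sum>j\<le>i. exp (- \<gamma> * Sc p \<beta> s i j) * isz (s ! j))"
    unfolding Oo_def using divide_left_mono[OF den nn] den by simp
  also have "\<dots> \<le> real (Suc i) * exp (- \<gamma> * \<delta>)" using num by simp
  finally show ?thesis .
qed

lemma Oo_lower:
  assumes A: "\<forall>v<p. Al s i v = (if b v then 1 else 0)" and g: "0 \<le> \<gamma>"
    and Z: "z \<le> i" "s ! z = Lit 0" "Sc p \<beta> s i z \<le> \<delta>" and gd: "\<gamma> * \<delta> \<le> 1"
  shows "Oo p \<beta> \<gamma> s i \<ge> exp (- 1) / real (Suc i)"
proof -
  have num: "(\<Sum>j\<le>i. exp (- \<gamma> * Sc p \<beta> s i j) * isz (s ! j)) \<ge> exp (- 1)"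
  proof -
    have "- 1 \<le> - \<gamma> * Sc p \<beta> s i z"
    proof -
      have "\<gamma> * Sc p \<beta> s i z \<le> \<gamma> * \<delta>" using Z(3) g by (simp add: mult_left_mono)
      then show ?thesis using gd by simp
    qed
    then have "exp (- 1) \<le> exp (- \<gamma> * Sc p \<beta> s i z) * isz (s ! z)" using Z(2) by (simp add: isz_def)
    also have "\<dots> \<le> (\<Sum>j\<le>i. exp (- \<gamma> * Sc p \<beta> s i j) * isz (s ! j))"
      by (rule member_le_sum) (use Z in \<open>auto simp: isz_def\<close>)
    finally show ?thesis .
  qed
  have den: "(\<Sum>j\<le>i. exp (- \<gamma> * Sc p \<beta> s i j)) \<le> real (Suc i)"
  proof -
    have "(\<Sum>j\<le>i. exp (- \<gamma> * Sc p \<beta> s i j)) \<le> (\<Sum>j\<le>i. 1)"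
    proof (rule sum_mono)
      fix j
      have "0 \<le> \<gamma> * Sc p \<beta> s i j" using g Sc_nonneg[OF A] by simp
      then show "exp (- \<gamma> * Sc p \<beta> s i j) \<le> 1" by simp
    qed
    then show ?thesis by simp
  qed
  have dpos: "(\<Sum>j\<le>i. exp (- \<gamma> * Sc p \<beta> s i j)) > 0" by (intro sum_pos) auto
  have "exp (- 1) / real (Suc i) \<le> exp (- 1) / (\<Sum>j\<le>i. exp (- \<gamma> * Sc p \<beta> s i j))"
    using den dpos by (intro divide_left_mono) auto
  also have "\<dots> \<le> Oo p \<beta> \<gamma> s i"
    unfolding Oo_def using num dpos by (intro divide_right_mono) auto
  finally show ?thesis .
qed

definition \<sigma>b :: "(nat \<Rightarrow> bool) \<Rightarrow> nat \<Rightarrow> bool" where "\<sigma>b b = (\<lambda>u. b (u - 1))"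

lemma lit_litOf1: "v < p \<Longrightarrow> lit_true (\<sigma>b b) (litOf p v) = b v"
  by (simp add: lit_true_def litOf_def \<sigma>b_def nat_add_distrib)

lemma lit_litOf2: "v < p \<Longrightarrow> lit_true (\<sigma>b b) (litOf p (p + v)) = (\<not> b v)"
  by (simp add: lit_true_def litOf_def \<sigma>b_def nat_add_distrib)

lemma litOf_nz: "litOf p c \<noteq> 0" by (simp add: litOf_def)

lemma lit_cases:
  assumes "l \<noteq> 0" "\<bar>l\<bar> \<le> int p"
  obtains v where "v < p" "l = litOf p v" | v where "v < p" "l = litOf p (p + v)"
proof (cases "l > 0")
  case True
  then have "nat l - 1 < p" "l = litOf p (nat l - 1)" using assms by (auto simp: litOf_def)
  then show ?thesis using that(1) by blast
next
  case False
  then have "nat (- l) - 1 < p" "l = litOf p (p + (nat (- l) - 1))" using assms by (auto simp: litOf_def)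
  then show ?thesis using that(2) by blast
qed

lemma Sc_sat:
  assumes A: "\<forall>v<p. Al s i v = (if b v then 1 else 0)" and s: "s = PF F @ r"
    and F0: "\<forall>C\<in>set F. 0 \<notin> set C \<and> (\<forall>l\<in>set C. \<bar>l\<bar> \<le> int p)" and r0: "Lit 0 \<notin> set r"
    and z: "z < length s" "s ! z = Lit 0" and bt: "0 \<le> \<beta>"
    and sat: "\<forall>C\<in>set F. \<exists>l\<in>set C. lit_true (\<sigma>b b) l"
  shows "Sc p \<beta> s i z \<ge> 1 / real (Suc z)"
proof -
  obtain C where C: "C \<in> set F" "\<forall>l. l \<noteq> 0 \<longrightarrow> (memberL s z l \<longleftrightarrow> l \<in> set C)"
    using clauses_D1[of F r z] F0 r0 z s by auto
  obtain l where l: "l \<in> set C" "lit_true (\<sigma>b b) l" using sat C by auto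
  have l0: "l \<noteq> 0" "\<bar>l\<bar> \<le> int p" using F0 C l by auto
  let ?T = "\<lambda>v. if b v then ch p \<beta> s z v else ch p \<beta> s z (p + v)"
  have nn: "\<And>v. 0 \<le> ?T v" by (auto intro: ch_nonneg)
  obtain v where v: "v < p" "?T v \<ge> 1 / real (Suc z)"
  proof (cases rule: lit_cases[OF l0])
    case (1 v)
    then have "b v" using l lit_litOf1 by auto
    moreover have "memberL s z (litOf p v)" using C 1 l litOf_nz[of p v] by auto
    ultimately show ?thesis using that[of v] 1 ch_member[OF z(1) bt] by auto
  next
    case (2 v)
    then have "\<not> b v" using l lit_litOf2 by auto
    moreover have "memberL s z (litOf p (p + v))" using C 2 l litOf_nz[of p "p + v"] by auto
    ultimately show ?thesis using that[of v] 2 ch_member[OF z(1) bt] by auto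
  qed
  have "?T v \<le> (\<Sum>v<p. ?T v)" by (rule member_le_sum) (use v nn in auto)
  then show ?thesis using v Sc_form[OF A, of \<beta> z] by simp
qed

lemma Sc_unsat:
  assumes A: "\<forall>v<p. Al s i v = (if b v then 1 else 0)" and s: "s = PF F @ r"
    and F0: "\<forall>C\<in>set F. 0 \<notin> set C" and bt: "0 \<le> \<beta>"
    and C: "C \<in> set F" "\<forall>l\<in>set C. \<not> lit_true (\<sigma>b b) l"
  shows "\<exists>z<length s. s ! z = Lit 0 \<and> Sc p \<beta> s i z \<le> real p * (real (Suc z) * exp (- \<beta>))"
proof -
  obtain z where z: "z < length s" "s ! z = Lit 0" "\<forall>l. l \<noteq> 0 \<longrightarrow> (memberL s z l \<longleftrightarrow> l \<in> set C)"
    using clauses_D2[OF F0 C(1), of r] s by auto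
  have "Sc p \<beta> s i z = (\<Sum>v<p. if b v then ch p \<beta> s z v else ch p \<beta> s z (p + v))"
    by (rule Sc_form[OF A])
  also have "\<dots> \<le> (\<Sum>v<p. real (Suc z) * exp (- \<beta>))"
  proof (rule sum_mono)
    fix v assume "v \<in> {..<p}"
    then have v: "v < p" by simp
    show "(if b v then ch p \<beta> s z v else ch p \<beta> s z (p + v)) \<le> real (Suc z) * exp (- \<beta>)"
    proof (cases "b v")
      case True
      then have "litOf p v \<notin> set C" using C(2) lit_litOf1[OF v] by auto
      then have "\<not> memberL s z (litOf p v)" using z(3) litOf_nz by blast
      then show ?thesis using True ch_nonmember[OF z(1) bt] by simp
    next
      case False
      then have "litOf p (p + v) \<notin> set C" using C(2) lit_litOf2[OF v] by auto
      then have "\<not> memberL s z (litOf p (p + v))" using z(3) litOf_nz by blast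
      then show ?thesis using False ch_nonmember[OF z(1) bt] by simp
    qed
  qed
  also have "\<dots> = real p * (real (Suc z) * exp (- \<beta>))" by simp
  finally show ?thesis using z by blast
qed

definition lowz :: "nat \<Rightarrow> (nat \<Rightarrow> bool) \<Rightarrow> nat" where
  "lowz p b = (LEAST t. t < p \<and> \<not> b t)"

lemma lowz_props:
  assumes "\<exists>t<p. \<not> b t"
  shows "lowz p b < p" "\<not> b (lowz p b)" "\<forall>u<lowz p b. b u"
proof -
  from assms obtain t where t: "t < p \<and> \<not> b t" by blast
  have L: "lowz p b < p \<and> \<not> b (lowz p b)" unfolding lowz_def by (rule LeastI[of _ t]) (use t in auto)
  then show "lowz p b < p" "\<not> b (lowz p b)" by auto
  show "\<forall>u<lowz p b. b u"
  proof (intro allI impI)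
    fix u assume "u < lowz p b"
    then have "\<not> (u < p \<and> \<not> b u)" unfolding lowz_def by (rule not_less_Least)
    then show "b u" using \<open>u < lowz p b\<close> L by auto
  qed
qed

lemma lowz_iff:
  assumes "\<exists>t<p. \<not> b t" "r < p"
  shows "(\<not> b r \<and> (\<forall>u<r. b u)) \<longleftrightarrow> r = lowz p b"
proof
  assume H: "\<not> b r \<and> (\<forall>u<r. b u)"
  have "lowz p b \<le> r" unfolding lowz_def by (rule Least_le) (use H assms in auto)
  moreover have "\<not> lowz p b < r" using H lowz_props(2)[OF assms(1)] by auto
  ultimately show "r = lowz p b" by simp
next
  assume "r = lowz p b"
  then show "\<not> b r \<and> (\<forall>u<r. b u)" using lowz_props[OF assms(1)] by auto
qed

lemma zz_val:
  assumes A: "\<forall>v<p. Al s i v = (if b v then 1 else 0)" and r: "r < p"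
  shows "zz s i r = (if \<not> b r \<and> (\<forall>u<r. b u) then 1 else 0)"
proof -
  have S: "(\<Sum>u<r. Al s i u) = (\<Sum>u<r. (if b u then 1 else 0))" using A r by (intro sum.cong) auto
  show ?thesis
  proof (cases "\<forall>u<r. b u")
    case True
    then have "(\<Sum>u<r. Al s i u) = real r" using S by simp
    then show ?thesis using True A r by (simp add: zz_def)
  next
    case False
    then obtain u0 where u0: "u0 < r" "\<not> b u0" by auto
    have "(\<Sum>u<r. (if b u then 1 else 0::real)) + 1 \<le> (\<Sum>u<r. (if b u then 1 else 0)) + (\<Sum>u<r. (if b u then 0 else 1::real))"
    proof -
      have "1 \<le> (\<Sum>u<r. (if b u then 0 else 1::real))"
        using member_le_sum[of u0 "{..<r}" "\<lambda>u. if b u then 0 else 1::real"] u0 by auto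
      then show ?thesis by simp
    qed
    also have "\<dots> = real r" by (simp add: sum.distrib[symmetric] if_distrib cong: if_cong)
    finally have "(\<Sum>u<r. Al s i u) \<le> real r - 1" using S by simp
    moreover have "0 \<le> Al s i r" using A r by simp
    ultimately have "1 - real r - Al s i r + (\<Sum>u<r. Al s i u) \<le> 0" by simp
    then show ?thesis using False by (simp add: zz_def)
  qed
qed

lemma next_tok_eq:
  assumes "j0 < length (vocab M)" "\<forall>j<length (vocab M). j \<noteq> j0 \<longrightarrow> logits M s j < logits M s j0"
  shows "next_tok M s = vocab M ! j0"
proof -
  have "(LEAST j. j < length (vocab M) \<and> (\<forall>j'<length (vocab M). logits M s j' \<le> logits M s j)) = j0"
  proof (rule Least_equality)
    show "j0 < length (vocab M) \<and> (\<forall>j'<length (vocab M). logits M s j' \<le> logits M s j0)"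
      using assms by (metis less_le order_refl)
  next
    fix y assume "y < length (vocab M) \<and> (\<forall>j'<length (vocab M). logits M s j' \<le> logits M s y)"
    then show "j0 \<le> y" using assms by (metis linorder_not_less order_refl)
  qed
  then show ?thesis by (simp add: next_tok_def)
qed

lemma length_vocabM: "length (vocabM p) = 3 * p + 5"
  by (simp add: vocabM_def)

lemma vocabM_nth: "vocabM p ! 0 = Aux 0" "vocabM p ! 1 = Aux 1"
  "r < p \<Longrightarrow> vocabM p ! (r + 2) = Aux (r + 2)"
  by (simp_all add: vocabM_def nth_append)

definition tokT :: "nat \<Rightarrow> tok" where "tokT v = Aux (v + 2)"
definition st :: "nat list \<Rightarrow> nat \<Rightarrow> real" where
  "st ts v = sum_list (map (\<lambda>t. gval (Aux (t + 2)) v) ts)"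

lemma sum_nth_list: "(\<Sum>j<length xs. f (xs ! j)) = sum_list (map f xs)"
proof (induction xs)
  case Nil
  then show ?case by simp
next
  case (Cons x xs)
  then show ?case by (simp add: sum.lessThan_Suc_shift del: sum.lessThan_Suc)
qed

lemma sum_list_zero: "(\<forall>x\<in>set xs. f x = 0) \<Longrightarrow> sum_list (map f xs) = (0::real)"
  by (induction xs) auto

lemma gval_dimacs: "t \<in> set (dimacs F) \<Longrightarrow> gval t v = 0"
proof -
  assume "t \<in> set (dimacs F)"
  then have "t = BOS \<or> t = SEP \<or> (\<exists>i. t = Lit i)" by (auto simp: dimacs_def split: if_splits)
  then show ?thesis by (auto simp: gval_def)
qed

lemma Al_last:
  assumes "s = dimacs F @ map tokT ts"
  shows "Al s (length s - 1) v = st ts v"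
proof -
  have ne: "length s > 0" using assms by (simp add: dimacs_def)
  then have "Suc (length s - 1) = length s" by simp
  then have "{..length s - 1} = {..<length s}" using lessThan_Suc_atMost[of "length s - 1"] by simp
  then have "Al s (length s - 1) v = (\<Sum>j<length s. gval (s ! j) v)" by (simp add: Al_def)
  also have "\<dots> = sum_list (map (\<lambda>t. gval t v) s)" by (rule sum_nth_list)
  also have "\<dots> = sum_list (map (\<lambda>t. gval t v) (dimacs F)) + sum_list (map (\<lambda>t. gval t v) (map tokT ts))"
    unfolding assms by (simp only: map_append sum_list_append)
  also have "sum_list (map (\<lambda>t. gval t v) (map tokT ts)) = st ts v"
    by (simp add: st_def tokT_def comp_def)
  also have "sum_list (map (\<lambda>t. gval t v) (dimacs F)) = 0"
    by (rule sum_list_zero) (simp add: gval_dimacs)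
  finally show ?thesis by simp
qed

lemma exp_m1: "exp (- 1) \<ge> (1/3::real)"
proof -
  have "exp 1 \<le> (3::real)" by (rule exp_le)
  then have "1 / 3 \<le> 1 / exp (1::real)" by (intro divide_left_mono) auto
  then show ?thesis by (simp add: exp_minus field_simps)
qed

lemma NT:
  assumes p: "1 \<le> p" and F0: "\<forall>C\<in>set F. 0 \<notin> set C \<and> (\<forall>l\<in>set C. \<bar>l\<bar> \<le> int p)"
    and s: "s = dimacs F @ map tokT ts"
    and A: "\<forall>v<p. st ts v = (if b v then 1 else 0)"
    and N: "real (length s) \<le> N" and bt: "0 \<le> \<beta>" and g: "0 \<le> \<gamma>"
    and H1: "N * exp (- \<gamma> * (1 / N)) \<le> 1 / (6 * N)"
    and H2: "\<gamma> * (real p * (N * exp (- \<beta>))) \<le> 1"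
  shows "next_tok (Mdl p \<beta> \<gamma> (36 * N) (1 / (4 * N))) s =
     (if \<forall>C\<in>set F. \<exists>l\<in>set C. lit_true (\<sigma>b b) l then Aux 1
      else if \<forall>v<p. b v then Aux 0 else Aux (lowz p b + 2))"
proof -
  let ?M = "Mdl p \<beta> \<gamma> (36 * N) (1 / (4 * N))"
  let ?i = "length s - 1"
  define r where "r = SEP # map tokT ts"
  have sr: "s = PF F @ r" using s by (simp add: dimacs_PF r_def)
  have r0: "Lit 0 \<notin> set r" by (auto simp: r_def tokT_def)
  have F00: "\<forall>C\<in>set F. 0 \<notin> set C" using F0 by auto
  have s0: "s ! 0 = BOS" using sr by (simp add: PF_def)
  have ne: "length s > 0" using sr by (simp add: PF_def)
  then have Si: "Suc ?i = length s" by simp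
  have Npos: "N > 0" using N ne by linarith
  have A': "\<forall>v<p. Al s ?i v = (if b v then 1 else 0)" using A Al_last[OF s] by simp
  have L: "logits ?M s j = (if j = 0 then 1/2 else if j = 1 then 9 - 36 * N * Oo p \<beta> \<gamma> s ?i
     else if j < p + 2 then zz s ?i (j - 2) else -1)" for j
    using logits_Mdl[OF p, of \<beta> \<gamma> "36 * N" "1 / (4 * N)" s j] Npos by simp
  have zzle: "zz s ?i r' \<le> 1" if "r' < p" for r'
    using zz_val[OF A' that] by simp
  have lenV: "length (vocab ?M) = 3 * p + 5" by (simp add: Mdl_f length_vocabM)
  show ?thesis
  proof (cases "\<forall>C\<in>set F. \<exists>l\<in>set C. lit_true (\<sigma>b b) l")
    case True
    have Z: "\<forall>z\<le>?i. s ! z = Lit 0 \<longrightarrow> Sc p \<beta> s ?i z \<ge> 1 / N"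
    proof (intro allI impI)
      fix z assume z: "z \<le> ?i" "s ! z = Lit 0"
      have zl: "z < length s" using z ne by (simp del: length_greater_0_conv)
      have "1 / N \<le> 1 / real (Suc z)"
        using z Si N Npos by (intro divide_left_mono) auto
      also have "\<dots> \<le> Sc p \<beta> s ?i z"
        by (rule Sc_sat[OF A' sr F0 r0 zl z(2) bt True])
      finally show "Sc p \<beta> s ?i z \<ge> 1 / N" .
    qed
    have "Oo p \<beta> \<gamma> s ?i \<le> real (Suc ?i) * exp (- \<gamma> * (1 / N))"
      by (rule Oo_upper[OF A' s0 g Z])
    also have "\<dots> \<le> N * exp (- \<gamma> * (1 / N))" using Si N by (intro mult_right_mono) auto
    also have "\<dots> \<le> 1 / (6 * N)" by (rule H1)
    finally have "36 * N * Oo p \<beta> \<gamma> s ?i \<le> 36 * N * (1 / (6 * N))" using Npos by (intro mult_left_mono) auto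
    then have L1: "logits ?M s 1 \<ge> 3" using L[of 1] Npos by simp
    have "next_tok ?M s = vocab ?M ! 1"
    proof (rule next_tok_eq)
      show "1 < length (vocab ?M)" using lenV by simp
      show "\<forall>j<length (vocab ?M). j \<noteq> 1 \<longrightarrow> logits ?M s j < logits ?M s 1"
      proof (intro allI impI)
        fix j assume "j < length (vocab ?M)" "j \<noteq> 1"
        then consider "j = 0" | "2 \<le> j \<and> j < p + 2" | "p + 2 \<le> j" by linarith
        then show "logits ?M s j < logits ?M s 1"
        proof cases
          case 1 then show ?thesis using L1 L[of j] by simp
        next
          case 2
          then have "j - 2 < p" by linarith
          then show ?thesis using 2 L1 L[of j] zzle[of "j - 2"] by auto
        next
          case 3 then show ?thesis using L1 L[of j] by auto
        qed
      qed
    qed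
    then show ?thesis using True vocabM_nth(2)[of p] by (simp add: Mdl_f)
  next
    case False
    then obtain C where C: "C \<in> set F" "\<forall>l\<in>set C. \<not> lit_true (\<sigma>b b) l" by auto
    obtain z where z: "z < length s" "s ! z = Lit 0" "Sc p \<beta> s ?i z \<le> real p * (real (Suc z) * exp (- \<beta>))"
      using Sc_unsat[OF A' sr F00 bt C] by blast
    have "Sc p \<beta> s ?i z \<le> real p * (N * exp (- \<beta>))"
    proof -
      have "real (Suc z) \<le> N" using z(1) N by (metis Suc_leI of_nat_le_iff order_trans)
      then have "real (Suc z) * exp (- \<beta>) \<le> N * exp (- \<beta>)" by (intro mult_right_mono) auto
      then have "real p * (real (Suc z) * exp (- \<beta>)) \<le> real p * (N * exp (- \<beta>))" by (intro mult_left_mono) auto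
      then show ?thesis using z(3) by linarith
    qed
    have zi: "z \<le> ?i" using z(1) by simp
    have "exp (- 1) / real (Suc ?i) \<le> Oo p \<beta> \<gamma> s ?i"
      by (rule Oo_lower[OF A' g zi z(2) \<open>Sc p \<beta> s ?i z \<le> real p * (N * exp (- \<beta>))\<close> H2])
    moreover have "1 / (3 * N) \<le> exp (- 1) / real (Suc ?i)"
    proof -
      have "1 / (3 * N) = (1/3) / N" by simp
      also have "\<dots> \<le> exp (- 1) / N" using exp_m1 Npos by (intro divide_right_mono) auto
      also have "\<dots> \<le> exp (- 1) / real (Suc ?i)" using Si N ne Npos by (intro divide_left_mono) (auto simp del: length_greater_0_conv)
      finally show ?thesis .
    qed
    ultimately have "1 / (3 * N) \<le> Oo p \<beta> \<gamma> s ?i" by linarith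
    then have "36 * N * (1 / (3 * N)) \<le> 36 * N * Oo p \<beta> \<gamma> s ?i" using Npos by (intro mult_left_mono) auto
    then have L1: "logits ?M s 1 \<le> -3" using L[of 1] Npos by simp
    show ?thesis
    proof (cases "\<forall>v<p. b v")
      case True
      have zz0: "zz s ?i r' = 0" if "r' < p" for r' using zz_val[OF A' that] True that by simp
      have "next_tok ?M s = vocab ?M ! 0"
      proof (rule next_tok_eq)
        show "0 < length (vocab ?M)" using lenV by simp
        show "\<forall>j<length (vocab ?M). j \<noteq> 0 \<longrightarrow> logits ?M s j < logits ?M s 0"
        proof (intro allI impI)
          fix j assume "j < length (vocab ?M)" "j \<noteq> 0"
          then consider "j = 1" | "2 \<le> j \<and> j < p + 2" | "p + 2 \<le> j" by linarith
          then show "logits ?M s j < logits ?M s 0"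
          proof cases
            case 1 then show ?thesis using L1 L[of 0] by simp
          next
            case 2 then show ?thesis using L[of j] L[of 0] zz0[of "j - 2"] by auto
          next
            case 3 then show ?thesis using L[of j] L[of 0] by auto
          qed
        qed
      qed
      then show ?thesis unfolding if_not_P[OF False] if_P[OF True] by (simp add: Mdl_f vocabM_nth)
    next
      case nall: False
      then have ex: "\<exists>t<p. \<not> b t" by auto
      let ?t = "lowz p b"
      have tp: "?t < p" by (rule lowz_props(1)[OF ex])
      have zzt: "zz s ?i r' = (if r' = ?t then 1 else 0)" if "r' < p" for r'
        using zz_val[OF A' that] lowz_iff[OF ex that] by simp
      have "next_tok ?M s = vocab ?M ! (?t + 2)"
      proof (rule next_tok_eq)
        show "?t + 2 < length (vocab ?M)" using lenV tp by simp
        show "\<forall>j<length (vocab ?M). j \<noteq> ?t + 2 \<longrightarrow> logits ?M s j < logits ?M s (?t + 2)"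
        proof (intro allI impI)
          fix j assume "j < length (vocab ?M)" "j \<noteq> ?t + 2"
          have Lt: "logits ?M s (?t + 2) = 1" using L[of "?t + 2"] zzt[of ?t] tp by simp
          from \<open>j < length (vocab ?M)\<close> consider "j = 0" | "j = 1" | "2 \<le> j \<and> j < p + 2" | "p + 2 \<le> j" by linarith
          then show "logits ?M s j < logits ?M s (?t + 2)"
          proof cases
            case 1 then show ?thesis using Lt L[of j] by simp
          next
            case 2 then show ?thesis using Lt L1 by simp
          next
            case 3
            then have "j - 2 \<noteq> ?t" using \<open>j \<noteq> ?t + 2\<close> by auto
            then show ?thesis using 3 Lt L[of j] zzt[of "j - 2"] by auto
          next
            case 4 then show ?thesis using Lt L[of j] by auto
          qed
        qed
      qed
      then show ?thesis unfolding if_not_P[OF False] if_not_P[OF nall] using vocabM_nth(3)[OF tp] by (simp add: Mdl_f)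
    qed
  qed
qed

section \<open>The binary counter\<close>

definition num :: "nat \<Rightarrow> (nat \<Rightarrow> bool) \<Rightarrow> nat" where
  "num p b = (\<Sum>v<p. if b v then 2 ^ v else 0)"

definition nxt :: "nat \<Rightarrow> (nat \<Rightarrow> bool) \<Rightarrow> nat \<Rightarrow> bool" where
  "nxt p b = (\<lambda>v. if v < lowz p b then False else if v = lowz p b then True else b v)"

definition bk :: "nat \<Rightarrow> nat \<Rightarrow> nat \<Rightarrow> bool" where
  "bk p k = (nxt p ^^ k) (\<lambda>_. False)"

fun tokseq :: "nat \<Rightarrow> nat \<Rightarrow> nat list" where
  "tokseq p 0 = []"
| "tokseq p (Suc k) = tokseq p k @ [lowz p (bk p k)]"

lemma geom2: "(\<Sum>v<q. (2::nat) ^ v) + 1 = 2 ^ q"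
  by (induction q) auto

lemma num_le: "num p b + 1 \<le> 2 ^ p"
proof -
  have "num p b \<le> (\<Sum>v<p. (2::nat) ^ v)" unfolding num_def by (intro sum_mono) auto
  then show ?thesis using geom2[of p] by linarith
qed

lemma num_notall:
  assumes "t < p" "\<not> b t"
  shows "num p b + 2 \<le> 2 ^ p"
proof -
  have "num p b + 2 ^ t = (\<Sum>v<p. if b v then 2 ^ v else 0) + (\<Sum>v<p. if v = t then (2::nat) ^ v else 0)"
    using assms by (simp add: num_def)
  also have "\<dots> \<le> (\<Sum>v<p. (2::nat) ^ v)"
    unfolding sum.distrib[symmetric] using assms by (intro sum_mono) auto
  finally have "num p b + 2 ^ t \<le> (\<Sum>v<p. (2::nat) ^ v)" .
  moreover have "(1::nat) \<le> 2 ^ t" by simp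
  ultimately show ?thesis using geom2[of p] by linarith
qed

lemma num_all: "(\<forall>v<p. b v) \<Longrightarrow> num p b + 1 = 2 ^ p"
proof -
  assume "\<forall>v<p. b v"
  then have "num p b = (\<Sum>v<p. (2::nat) ^ v)" unfolding num_def by (intro sum.cong) auto
  then show ?thesis using geom2[of p] by simp
qed

lemma num_Suc: "num (Suc p) b = num p b + (if b p then 2 ^ p else 0)"
  by (simp add: num_def)

lemma num_inj: "num p b = num p b' \<Longrightarrow> \<forall>v<p. b v = b' v"
proof (induction p)
  case 0
  then show ?case by simp
next
  case (Suc p)
  have bp: "b p = b' p"
  proof (rule ccontr)
    assume ne: "b p \<noteq> b' p"
    show False
    proof (cases "b p")
      case True
      then have "num (Suc p) b \<ge> 2 ^ p" by (simp add: num_Suc)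
      moreover have "num (Suc p) b' + 1 \<le> 2 ^ p" using ne True num_le[of p b'] by (simp add: num_Suc)
      ultimately show False using Suc.prems by simp
    next
      case False
      then have "num (Suc p) b' \<ge> 2 ^ p" using ne by (simp add: num_Suc)
      moreover have "num (Suc p) b + 1 \<le> 2 ^ p" using ne False num_le[of p b] by (simp add: num_Suc)
      ultimately show False using Suc.prems by simp
    qed
  qed
  then have "num p b = num p b'" using Suc.prems by (simp add: num_Suc)
  then have "\<forall>v<p. b v = b' v" by (rule Suc.IH)
  then show ?case using bp by (auto simp: less_Suc_eq)
qed

lemma num_nxt:
  assumes ex: "\<exists>t<p. \<not> b t"
  shows "num p (nxt p b) = num p b + 1"
proof -
  let ?t = "lowz p b"
  have tp: "?t < p" and nb: "\<not> b ?t" and lb: "\<forall>u<?t. b u" using lowz_props[OF ex] by auto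
  have base: "num (Suc ?t) (nxt p b) = num (Suc ?t) b + 1"
  proof -
    have "num (Suc ?t) (nxt p b) = 2 ^ ?t" by (simp add: num_Suc num_def nxt_def)
    moreover have "num (Suc ?t) b = (\<Sum>v<?t. (2::nat) ^ v)" using nb lb by (simp add: num_Suc num_def)
    ultimately show ?thesis using geom2[of ?t] by simp
  qed
  have step: "num (Suc ?t + d) (nxt p b) = num (Suc ?t + d) b + 1" for d
  proof (induction d)
    case 0
    then show ?case using base by simp
  next
    case (Suc d)
    have "nxt p b (Suc ?t + d) = b (Suc ?t + d)" by (simp add: nxt_def)
    then show ?case using Suc.IH by (simp add: num_Suc)
  qed
  have "p = Suc ?t + (p - Suc ?t)" using tp by simp
  then show ?thesis using step[of "p - Suc ?t"] by metis
qed

lemma st_snoc: "st (ts @ [t]) v = st ts v + gval (Aux (t + 2)) v"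
  by (simp add: st_def)

lemma counter:
  assumes "k + 1 \<le> 2 ^ p"
  shows "num p (bk p k) = k \<and> (\<forall>v<p. st (tokseq p k) v = (if bk p k v then 1 else 0))"
  using assms
proof (induction k)
  case 0
  then show ?case by (simp add: bk_def num_def st_def)
next
  case (Suc k)
  then have IH: "num p (bk p k) = k" "\<forall>v<p. st (tokseq p k) v = (if bk p k v then 1 else 0)" by auto
  have ex: "\<exists>t<p. \<not> bk p k t"
  proof (rule ccontr)
    assume "\<not> (\<exists>t<p. \<not> bk p k t)"
    then have "num p (bk p k) + 1 = 2 ^ p" by (intro num_all) auto
    then show False using IH Suc.prems by simp
  qed
  have bkS: "bk p (Suc k) = nxt p (bk p k)" by (simp add: bk_def)
  let ?t = "lowz p (bk p k)"
  have lb: "\<forall>u<?t. bk p k u" and nb: "\<not> bk p k ?t" using lowz_props[OF ex] by auto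
  have "\<forall>v<p. st (tokseq p (Suc k)) v = (if bk p (Suc k) v then 1 else 0)"
  proof (intro allI impI)
    fix v assume "v < p"
    then show "st (tokseq p (Suc k)) v = (if bk p (Suc k) v then 1 else 0)"
      using IH(2) lb nb by (auto simp: st_snoc bkS nxt_def gval_def)
  qed
  then show ?case using num_nxt[OF ex] IH bkS by simp
qed

lemma blk_app_inj:
  "0 \<notin> set C \<Longrightarrow> 0 \<notin> set C' \<Longrightarrow> blk C @ R = blk C' @ R' \<Longrightarrow> C = C' \<and> R = R'"
proof (induction C arbitrary: C')
  case Nil
  then show ?case by (cases C') (auto simp: blk_def)
next
  case (Cons a C)
  then show ?case by (cases C') (auto simp: blk_def)
qed

lemma concat_blk_inj:
  "(\<forall>C\<in>set F. 0 \<notin> set C) \<Longrightarrow> (\<forall>C\<in>set F'. 0 \<notin> set C) \<Longrightarrow>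
   concat (map blk F) = concat (map blk F') \<Longrightarrow> F = F'"
proof (induction F arbitrary: F')
  case Nil
  then show ?case by (cases F') (auto simp: blk_def)
next
  case (Cons C F)
  then show ?case
  proof (cases F')
    case Nil
    then show ?thesis using Cons.prems by (auto simp: blk_def)
  next
    case (Cons C' F'')
    then have "C = C' \<and> concat (map blk F) = concat (map blk F'')"
      using Cons.prems blk_app_inj[of C C' "concat (map blk F)" "concat (map blk F'')"] by auto
    then show ?thesis using Cons.IH[of F''] Cons.prems \<open>F' = C' # F''\<close> by auto
  qed
qed

lemma dimacs_inj:
  "(\<forall>C\<in>set F. 0 \<notin> set C) \<Longrightarrow> (\<forall>C\<in>set F'. 0 \<notin> set C) \<Longrightarrow> dimacs F = dimacs F' \<Longrightarrow> F = F'"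
  by (rule concat_blk_inj) (auto simp: dimacs_PF PF_def)

lemma len_concat_blk: "(\<forall>C\<in>set F. length C \<le> 3) \<Longrightarrow> length (concat (map blk F)) \<le> 4 * length F"
  by (induction F) (auto simp: blk_def)

lemma valid_props:
  assumes "valid_formula p c F"
  shows "\<forall>C\<in>set F. 0 \<notin> set C \<and> (\<forall>l\<in>set C. \<bar>l\<bar> \<le> int p)" "length (dimacs F) \<le> 4 * c + 2"
proof -
  show "\<forall>C\<in>set F. 0 \<notin> set C \<and> (\<forall>l\<in>set C. \<bar>l\<bar> \<le> int p)"
    using assms by (auto simp: valid_formula_def)
  have "length (concat (map blk F)) \<le> 4 * length F"
    using assms by (intro len_concat_blk) (auto simp: valid_formula_def)
  moreover have "length F \<le> c" using assms by (simp add: valid_formula_def)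
  ultimately show "length (dimacs F) \<le> 4 * c + 2" by (simp add: dimacs_PF PF_def)
qed

section \<open>Running the chain of thought\<close>

definition satb :: "(nat \<Rightarrow> bool) \<Rightarrow> int list list \<Rightarrow> bool" where
  "satb b F \<longleftrightarrow> (\<forall>C\<in>set F. \<exists>l\<in>set C. lit_true (\<sigma>b b) l)"

lemma coverage:
  assumes F0: "\<forall>C\<in>set F. 0 \<notin> set C \<and> (\<forall>l\<in>set C. \<bar>l\<bar> \<le> int p)" and sat: "satisfiable F"
  shows "\<exists>k. k + 1 \<le> 2 ^ p \<and> satb (bk p k) F"
proof -
  obtain \<sigma> where \<sigma>: "\<forall>C\<in>set F. \<exists>l\<in>set C. lit_true \<sigma> l" using sat by (auto simp: satisfiable_def)
  define b where "b = (\<lambda>v. \<sigma> (v + 1))"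
  define k where "k = num p b"
  have k: "k + 1 \<le> 2 ^ p" using num_le unfolding k_def .
  then have "num p (bk p k) = num p b" using counter[OF k] k_def by simp
  then have agree: "\<forall>v<p. bk p k v = b v" by (rule num_inj)
  have "lit_true (\<sigma>b (bk p k)) l = lit_true \<sigma> l" if "l \<noteq> 0" "\<bar>l\<bar> \<le> int p" for l
  proof (cases "l > 0")
    case True
    then have "nat l - 1 < p" "Suc (nat l - 1) = nat l" using that by auto
    then show ?thesis using True agree by (simp add: lit_true_def \<sigma>b_def b_def)
  next
    case False
    then have "nat (- l) - 1 < p" "Suc (nat (- l) - 1) = nat (- l)" using that by auto
    then show ?thesis using False agree by (simp add: lit_true_def \<sigma>b_def b_def)
  qed
  then have "satb (bk p k) F" using \<sigma> F0 unfolding satb_def by metis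
  then show ?thesis using k by blast
qed

lemma gen_tok_Suc: "gen_tok M s (Suc k) = next_tok M (run M s k)"
  by (simp add: gen_tok_def)

definition Nn :: "nat \<Rightarrow> nat \<Rightarrow> nat" where "Nn p c = 4 * c + 2 ^ p + 2"
definition NN :: "nat \<Rightarrow> nat \<Rightarrow> real" where "NN p c = real (Nn p c)"
definition gam :: "nat \<Rightarrow> nat \<Rightarrow> real" where "gam p c = 6 * NN p c ^ 3"
definition bet :: "nat \<Rightarrow> nat \<Rightarrow> real" where "bet p c = gam p c * real p * NN p c"
definition MM :: "nat \<Rightarrow> nat \<Rightarrow> transformer" where
  "MM p c = Mdl p (bet p c) (gam p c) (36 * NN p c) (1 / (4 * NN p c))"

lemma params_ok:
  assumes "1 \<le> p"
  shows "0 \<le> bet p c" "0 \<le> gam p c"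
    "NN p c * exp (- gam p c * (1 / NN p c)) \<le> 1 / (6 * NN p c)"
    "gam p c * (real p * (NN p c * exp (- bet p c))) \<le> 1"
proof -
  let ?N = "NN p c"
  have Np: "?N > 0" unfolding NN_def by (simp only: of_nat_0_less_iff) (simp add: Nn_def)
  show "0 \<le> gam p c" using Np by (simp add: gam_def)
  show b0: "0 \<le> bet p c" using Np by (simp add: bet_def gam_def)
  have g: "gam p c * (1 / ?N) = 6 * ?N ^ 2" using Np by (simp add: gam_def power2_eq_square power3_eq_cube)
  have e: "exp (6 * ?N ^ 2) \<ge> 6 * ?N ^ 2" using exp_ge_add_one_self[of "6 * ?N ^ 2"] by linarith
  have "?N * exp (- gam p c * (1 / ?N)) = ?N / exp (6 * ?N ^ 2)"
    using g by (simp add: exp_minus field_simps)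
  also have "\<dots> \<le> ?N / (6 * ?N ^ 2)" using e Np by (intro divide_left_mono) auto
  also have "\<dots> = 1 / (6 * ?N)" using Np by (simp add: power2_eq_square)
  finally show "?N * exp (- gam p c * (1 / ?N)) \<le> 1 / (6 * ?N)" .
  have "gam p c * (real p * (?N * exp (- bet p c))) = bet p c / exp (bet p c)"
    by (simp add: bet_def exp_minus field_simps)
  also have "\<dots> \<le> 1"
  proof -
    have "bet p c \<le> exp (bet p c)" using exp_ge_add_one_self[of "bet p c"] by linarith
    then show ?thesis by simp
  qed
  finally show "gam p c * (real p * (?N * exp (- bet p c))) \<le> 1" .
qed

lemma run_prefix:
  assumes p: "1 \<le> p" and v: "valid_formula p c F" and x: "x = dimacs F"
  shows "k + 1 \<le> 2 ^ p \<Longrightarrow> (\<forall>k'<k. \<not> satb (bk p k') F) \<Longrightarrow> run (MM p c) x k = x @ map tokT (tokseq p k)"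
proof (induction k)
  case 0
  then show ?case by simp
next
  case (Suc k)
  have IH: "run (MM p c) x k = x @ map tokT (tokseq p k)" using Suc by auto
  have cnt: "num p (bk p k) = k" "\<forall>v<p. st (tokseq p k) v = (if bk p k v then 1 else 0)"
    using counter[of k p] Suc.prems by auto
  have ns: "\<not> satb (bk p k) F" using Suc.prems by auto
  have nall: "\<not> (\<forall>v<p. bk p k v)"
  proof
    assume "\<forall>v<p. bk p k v"
    then have "num p (bk p k) + 1 = 2 ^ p" by (rule num_all)
    then show False using cnt Suc.prems by simp
  qed
  have F0: "\<forall>C\<in>set F. 0 \<notin> set C \<and> (\<forall>l\<in>set C. \<bar>l\<bar> \<le> int p)" using valid_props(1)[OF v] .
  have lenx: "length x \<le> 4 * c + 2" using valid_props(2)[OF v] x by simp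
  have len: "real (length (x @ map tokT (tokseq p k))) \<le> NN p c"
  proof -
    have "length (tokseq p k) = k" by (induction k) auto
    then have "length (x @ map tokT (tokseq p k)) \<le> Nn p c" using lenx Suc.prems by (simp add: Nn_def)
    then show ?thesis by (simp add: NN_def)
  qed
  have "next_tok (MM p c) (x @ map tokT (tokseq p k)) = Aux (lowz p (bk p k) + 2)"
    unfolding MM_def
    using NT[OF p F0 _ cnt(2) len params_ok(1,2)[OF p] params_ok(3,4)[OF p]] x ns nall
    by (simp add: satb_def)
  then have "next_tok (MM p c) (run (MM p c) x k) = Aux (lowz p (bk p k) + 2)" using IH by simp
  then show ?case using IH by (simp add: tokT_def)
qed

lemma run_main:
  assumes p: "1 \<le> p" and v: "valid_formula p c F" and x: "x = dimacs F"
  shows "\<exists>t\<le>2 ^ p. halts_with (MM p c) (Aux 0) (Aux 1) x t (three_sat p c x)"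
proof -
  have F0: "\<forall>C\<in>set F. 0 \<notin> set C \<and> (\<forall>l\<in>set C. \<bar>l\<bar> \<le> int p)" using valid_props(1)[OF v] .
  have lenx: "length x \<le> 4 * c + 2" using valid_props(2)[OF v] x by simp
  define ks where "ks = (if \<exists>k. k + 1 \<le> 2 ^ p \<and> satb (bk p k) F then (LEAST k. k + 1 \<le> 2 ^ p \<and> satb (bk p k) F) else 2 ^ p - 1)"
  have ks1: "ks + 1 \<le> 2 ^ p"
  proof (cases "\<exists>k. k + 1 \<le> 2 ^ p \<and> satb (bk p k) F")
    case True
    then obtain k0 where "k0 + 1 \<le> 2 ^ p \<and> satb (bk p k0) F" by blast
    then have "(LEAST k. k + 1 \<le> 2 ^ p \<and> satb (bk p k) F) + 1 \<le> 2 ^ p \<and> satb (bk p (LEAST k. k + 1 \<le> 2 ^ p \<and> satb (bk p k) F)) F"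
      by (rule LeastI)
    then show ?thesis unfolding ks_def using True by simp
  next
    case False
    show ?thesis unfolding ks_def if_not_P[OF False] by simp
  qed
  have ks2: "\<forall>k'<ks. \<not> satb (bk p k') F"
  proof (intro allI impI)
    fix k' assume "k' < ks"
    show "\<not> satb (bk p k') F"
    proof (cases "\<exists>k. k + 1 \<le> 2 ^ p \<and> satb (bk p k) F")
      case True
      then have "k' < (LEAST k. k + 1 \<le> 2 ^ p \<and> satb (bk p k) F)" using \<open>k' < ks\<close> ks_def by simp
      then have "\<not> (k' + 1 \<le> 2 ^ p \<and> satb (bk p k') F)" by (rule not_less_Least)
      then show ?thesis using \<open>k' < ks\<close> ks1 by auto
    next
      case False
      then show ?thesis using \<open>k' < ks\<close> ks1 by auto
    qed
  qed
  have R: "run (MM p c) x ks = x @ map tokT (tokseq p ks)" by (rule run_prefix[OF p v x ks1 ks2])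
  have Rk: "run (MM p c) x k = x @ map tokT (tokseq p k)" if "k < ks" for k
    using run_prefix[OF p v x, of k] that ks1 ks2 by auto
  have cnt: "num p (bk p ks) = ks" "\<forall>v<p. st (tokseq p ks) v = (if bk p ks v then 1 else 0)"
    using counter[OF ks1] by auto
  have len: "real (length (x @ map tokT (tokseq p ks))) \<le> NN p c"
  proof -
    have "length (tokseq p ks) = ks" by (induction ks) auto
    then have "length (x @ map tokT (tokseq p ks)) \<le> Nn p c" using lenx ks1 by (simp add: Nn_def)
    then show ?thesis by (simp add: NN_def)
  qed
  have NTk: "next_tok (MM p c) (x @ map tokT (tokseq p k)) =
     (if satb (bk p k) F then Aux 1 else if \<forall>v<p. bk p k v then Aux 0 else Aux (lowz p (bk p k) + 2))"
    if "k + 1 \<le> 2 ^ p" for k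
  proof -
    have c2: "\<forall>v<p. st (tokseq p k) v = (if bk p k v then 1 else 0)" using counter[OF that] by auto
    have "real (length (x @ map tokT (tokseq p k))) \<le> NN p c"
    proof -
      have "length (tokseq p k) = k" by (induction k) auto
      then have "length (x @ map tokT (tokseq p k)) \<le> Nn p c" using lenx that by (simp add: Nn_def)
      then show ?thesis by (simp add: NN_def)
    qed
    then show ?thesis unfolding MM_def
      using NT[OF p F0 _ c2 _ params_ok(1,2)[OF p] params_ok(3,4)[OF p]] x by (simp add: satb_def)
  qed
  have early: "gen_tok (MM p c) x t' \<notin> {Aux 0, Aux 1}" if "1 \<le> t'" "t' < Suc ks" for t'
  proof -
    define k where "k = t' - 1"
    have k: "t' = Suc k" "k < ks" using that by (auto simp: k_def)
    have k1: "k + 1 \<le> 2 ^ p" using k ks1 by simp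
    have ns: "\<not> satb (bk p k) F" using ks2 k by auto
    have nall: "\<not> (\<forall>v<p. bk p k v)"
    proof
      assume "\<forall>v<p. bk p k v"
      then have "num p (bk p k) + 1 = 2 ^ p" by (rule num_all)
      moreover have "num p (bk p k) = k" using counter[OF k1] by auto
      ultimately show False using k ks1 by simp
    qed
    show ?thesis using k Rk[of k] NTk[OF k1] ns nall by (simp add: gen_tok_Suc)
  qed
  show ?thesis
  proof (cases "satb (bk p ks) F")
    case True
    have g: "gen_tok (MM p c) x (Suc ks) = Aux 1" using R NTk[OF ks1] True by (simp add: gen_tok_Suc)
    have "satisfiable F" using True by (auto simp: satb_def satisfiable_def)
    then have ts: "three_sat p c x = 1" using v x by (auto simp: three_sat_def)
    have "halts_with (MM p c) (Aux 0) (Aux 1) x (Suc ks) (three_sat p c x)"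
      unfolding halts_with_def using g early ts by auto
    then show ?thesis using ks1 by (intro exI[of _ "Suc ks"]) auto
  next
    case False
    have noS: "\<not> (\<exists>k. k + 1 \<le> 2 ^ p \<and> satb (bk p k) F)"
    proof
      assume ex: "\<exists>k. k + 1 \<le> 2 ^ p \<and> satb (bk p k) F"
      then obtain k0 where "k0 + 1 \<le> 2 ^ p \<and> satb (bk p k0) F" by blast
      then have "(LEAST k. k + 1 \<le> 2 ^ p \<and> satb (bk p k) F) + 1 \<le> 2 ^ p \<and> satb (bk p (LEAST k. k + 1 \<le> 2 ^ p \<and> satb (bk p k) F)) F"
        by (rule LeastI)
      then have "satb (bk p (LEAST k. k + 1 \<le> 2 ^ p \<and> satb (bk p k) F)) F" by simp
      then show False using False ex ks_def by simp
    qed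
    have ksv: "ks = 2 ^ p - 1" unfolding ks_def if_not_P[OF noS] ..
    have all: "\<forall>v<p. bk p ks v"
    proof (rule ccontr)
      assume "\<not> (\<forall>v<p. bk p ks v)"
      then obtain t where "t < p" "\<not> bk p ks t" by auto
      then have "num p (bk p ks) + 2 \<le> 2 ^ p" by (rule num_notall)
      then show False using cnt(1) ksv by simp
    qed
    have g: "gen_tok (MM p c) x (Suc ks) = Aux 0" using R NTk[OF ks1] False all by (simp add: gen_tok_Suc)
    have unsat: "\<not> satisfiable F" using coverage[OF F0] noS by blast
    have "three_sat p c x = 0"
    proof -
      have "\<not> (\<exists>F'. valid_formula p c F' \<and> x = dimacs F' \<and> satisfiable F')"
      proof
        assume "\<exists>F'. valid_formula p c F' \<and> x = dimacs F' \<and> satisfiable F'"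
        then obtain F' where F': "valid_formula p c F'" "x = dimacs F'" "satisfiable F'" by blast
        have "F' = F" using dimacs_inj[of F' F] valid_props(1)[OF F'(1)] F0 F'(2) x by auto
        then show False using F'(3) unsat by simp
      qed
      then show ?thesis by (simp add: three_sat_def)
    qed
    then have "halts_with (MM p c) (Aux 0) (Aux 1) x (Suc ks) (three_sat p c x)"
      unfolding halts_with_def using g early by auto
    then show ?thesis using ks1 by (intro exI[of _ "Suc ks"]) auto
  qed
qed

lemma MM_f: "vocab (MM p c) = vocabM p" "dim (MM p c) = 6 + 8*p" "nheads (MM p c) = 5"
  "pos_coord (MM p c) = 1"
  "layers (MM p c) = [L1 p, L2 p, L3 p (bet p c), L4 p, L5 p (gam p c), L0, L0]"
  by (simp_all add: MM_def Mdl_f)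

lemma num_params_MM: "num_params (MM p c) = 736 * p^2 + 1039 * p + 367"
  by (simp add: num_params_def MM_f length_vocabM layer_params_def L0_def L1_def L2_def L3_def L4_def L5_def
      algebra_simps power2_eq_square)

lemma wf_MM: "wf_transformer (MM p c)"
  by (simp add: wf_transformer_def MM_f vocabM_def distinct_map inj_on_def) auto

lemma alphabet_MM: "dimacs_alphabet p \<subseteq> set (vocab (MM p c))"
proof
  fix t assume "t \<in> dimacs_alphabet p"
  then consider "t = BOS" | "t = SEP" | i where "t = Lit i" "\<bar>i\<bar> \<le> int p"
    by (auto simp: dimacs_alphabet_def)
  then show "t \<in> set (vocab (MM p c))"
  proof cases
    case 3
    then have "i \<in> set [- int p..int p]" by auto
    then show ?thesis using 3 by (simp add: MM_f vocabM_def)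
  qed (auto simp: MM_f vocabM_def)
qed

lemma decides_MM:
  assumes p: "1 \<le> p"
  shows "decides_3sat_within (MM p c) p c (p * 2 ^ (p + 1))"
proof -
  have A: "\<forall>x\<in>DIMACS p c. \<exists>t\<le>p * 2 ^ (p + 1). halts_with (MM p c) (Aux 0) (Aux 1) x t (three_sat p c x)"
  proof
    fix x assume "x \<in> DIMACS p c"
    then obtain F where F: "valid_formula p c F" "x = dimacs F" by (auto simp: DIMACS_def)
    obtain t where t: "t \<le> 2 ^ p" "halts_with (MM p c) (Aux 0) (Aux 1) x t (three_sat p c x)"
      using run_main[OF p F] by blast
    have "(2::nat) ^ p \<le> 1 * 2 ^ (p + 1)" by simp
    also have "\<dots> \<le> p * 2 ^ (p + 1)" using p by (intro mult_right_mono) auto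
    finally have "t \<le> p * 2 ^ (p + 1)" using t(1) by (rule le_trans[rotated])
    then show "\<exists>t\<le>p * 2 ^ (p + 1). halts_with (MM p c) (Aux 0) (Aux 1) x t (three_sat p c x)"
      using t(2) by blast
  qed
  have B: "Aux 0 \<in> set (vocab (MM p c))" "Aux 1 \<in> set (vocab (MM p c))"
    by (auto simp: MM_f vocabM_def)
  have C: "Aux 0 \<noteq> Aux 1" by simp
  show ?thesis unfolding decides_3sat_within_def
    using alphabet_MM[of p c] A B C by (intro conjI exI[of _ "Aux 0"] exI[of _ "Aux 1"]) auto
qed

theorem mainTheorem1:
  "\<exists>C::real. \<forall>p c::nat. 1 \<le> p \<longrightarrow> 1 \<le> c \<longrightarrow>
     (\<exists>M. wf_transformer M \<and> length (layers M) = 7 \<and> nheads M = 5 \<and>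
          real (dim M) \<le> C * real p \<and> real (num_params M) \<le> C * real p ^ 2 \<and>
          decides_3sat_within M p c (p * 2 ^ (p + 1)))"
proof (intro exI[of _ "10000"] allI impI)
  fix p c :: nat
  assume p: "1 \<le> p" and "1 \<le> c"
  have d: "real (dim (MM p c)) \<le> 10000 * real p" using p by (simp add: MM_f)
  have "num_params (MM p c) \<le> 10000 * p ^ 2"
  proof -
    have "p \<le> p ^ 2" "1 \<le> p ^ 2" using p by (auto simp: power2_eq_square)
    then show ?thesis unfolding num_params_MM by linarith
  qed
  then have n: "real (num_params (MM p c)) \<le> 10000 * real p ^ 2"
    by (metis of_nat_le_iff of_nat_mult of_nat_numeral of_nat_power)
  show "\<exists>M. wf_transformer M \<and> length (layers M) = 7 \<and> nheads M = 5 \<and>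
          real (dim M) \<le> 10000 * real p \<and> real (num_params M) \<le> 10000 * real p ^ 2 \<and>
          decides_3sat_within M p c (p * 2 ^ (p + 1))"
    using wf_MM d n decides_MM[OF p] by (intro exI[of _ "MM p c"]) (simp add: MM_f)
qed

end
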